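(* Let $L\ge 1$ be an integer. Then, as polynomials in $u,v$, \[ \text{(i)}\quad (1+u)^L(1+uv)^L(1-u^2v)(1-v)=\sum_{N,M\ge 0} Z(L;N,M)\,u^Nv^M, \] \[ \text{(ii)}\quad (1+u)^L(1+uv)^L(1-v)=\sum_{N,M\ge 0}\widetilde{Z}(L;N,M)\,u^Nv^M . \]
   Context: For integers $x$ and $k\ge0$ let $\binom{x}{k}=\frac{x(x-1)\cdots(x-k+1)}{k!}$ (generalized binomial coefficient; $\binom{L}{k}=0$ for $k>L\ge0$). For integers $N,M\ge 0$ define \[ Z(L;N,M)=\sum \binom{L}{N_r}\prod_{n\ge1}\binom{P'_n+M'_n}{M'_n}\binom{P_n+M_n}{M_n},\qquad \widetilde{Z}(L;N,M)=\sum \binom{L}{N_r}\prod_{n\ge1}\binom{P'_n+M'_n+n}{M'_n}\binom{P_n+M_n}{M_n}, \] where each sum runs over all nonnegative integers $N_r$ and finitely supported families of nonnegative integers $(M_n)_{n\ge1}$, $(M'_n)_{n\ge1}$ with $N=N_r+2\sum_{n\ge1}nM'_n$ and $M=\sum_{n\ge1}n(M_n+M'_n)$, and where $P'_n=L-N+2\sum_{m>n}(m-n)M'_m$ and $P_n=N-2M+2\sum_{m>n}(m-n)M_m$. *)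

theory Defs
  imports Main "HOL-Computational_Algebra.Polynomial"
begin

text \<open>Generalized binomial coefficient for an integer top: x(x-1)...(x-k+1)/k!
  (the division is exact).\<close>
definition gbinom :: "int \<Rightarrow> nat \<Rightarrow> int" where
  "gbinom x k = (\<Prod>i<k. x - int i) div fact k"

definition fsum :: "(nat \<Rightarrow> int) \<Rightarrow> int" where
  "fsum f = sum f {n. f n \<noteq> 0}"

definition fprod_pos :: "(nat \<Rightarrow> int) \<Rightarrow> int" where
  "fprod_pos g = prod g {n. 1 \<le> n \<and> g n \<noteq> 1}"

text \<open>Admissible configurations (N_r, (M_n), (M'_n)); the families are indexed by n \<ge> 1,
  so we require value 0 at index 0, and finite support.\<close>
definition Zconf :: "nat \<Rightarrow> nat \<Rightarrow> (nat \<times> (nat \<Rightarrow> nat) \<times> (nat \<Rightarrow> nat)) set" where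
  "Zconf N M = {(Nr, m, m'). m 0 = 0 \<and> m' 0 = 0 \<and>
      finite {n. m n \<noteq> 0} \<and> finite {n. m' n \<noteq> 0} \<and>
      int N = int Nr + 2 * fsum (\<lambda>n. int n * int (m' n)) \<and>
      int M = fsum (\<lambda>n. int n * (int (m n) + int (m' n)))}"

definition Pp :: "nat \<Rightarrow> nat \<Rightarrow> (nat \<Rightarrow> nat) \<Rightarrow> nat \<Rightarrow> int" where
  "Pp L N m' n = int L - int N +
     2 * fsum (\<lambda>k. if n < k then (int k - int n) * int (m' k) else 0)"

definition P :: "nat \<Rightarrow> nat \<Rightarrow> (nat \<Rightarrow> nat) \<Rightarrow> nat \<Rightarrow> int" where
  "P N M m n = int N - 2 * int M +
     2 * fsum (\<lambda>k. if n < k then (int k - int n) * int (m k) else 0)"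

definition Z :: "nat \<Rightarrow> nat \<Rightarrow> nat \<Rightarrow> int" where
  "Z L N M = (\<Sum>(Nr, m, m') \<in> Zconf N M.
     gbinom (int L) Nr *
     fprod_pos (\<lambda>n. gbinom (Pp L N m' n + int (m' n)) (m' n) *
                    gbinom (P N M m n + int (m n)) (m n)))"

definition Ztilde :: "nat \<Rightarrow> nat \<Rightarrow> nat \<Rightarrow> int" where
  "Ztilde L N M = (\<Sum>(Nr, m, m') \<in> Zconf N M.
     gbinom (int L) Nr *
     fprod_pos (\<lambda>n. gbinom (Pp L N m' n + int (m' n) + int n) (m' n) *
                    gbinom (P N M m n + int (m n)) (m n)))"

text \<open>Bivariate integer polynomials as \<open>int poly poly\<close>: outer variable u, inner variable v.
  The coefficient of u^N v^M of p is \<open>coeff (coeff p N) M\<close>.\<close>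
definition var_u :: "int poly poly" where "var_u = [:0, 1:]"
definition var_v :: "int poly poly" where "var_v = [:[:0, 1:]:]"

end

theory Submission
  imports Defs "HOL-Computational_Algebra.Formal_Power_Series"
begin


lemma tri_swap:
  fixes g :: "nat \<Rightarrow> nat \<Rightarrow> 'a::comm_monoid_add"
  shows "(\<Sum>i\<le>n. \<Sum>l\<le>n-i. g i (i+l)) = (\<Sum>p\<le>n. \<Sum>i\<le>p. g i p)"
proof -
  have 1: "(\<Sum>l\<le>n-i. g i (i+l)) = (\<Sum>p\<in>{p. p \<in> {..n} \<and> i \<le> p}. g i p)" if "i \<le> n" for i
  proof -
    have "{p. p \<in> {..n} \<and> i \<le> p} = {i..n}" by auto
    moreover have "(\<Sum>l\<le>n-i. g i (i+l)) = (\<Sum>p\<in>{i..n}. g i p)"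
      using that sum.shift_bounds_cl_nat_ivl[of "g i" 0 i "n-i"]
      by (simp add: atMost_atLeast0 add.commute)
    ultimately show ?thesis by simp
  qed
  have "(\<Sum>i\<le>n. \<Sum>l\<le>n-i. g i (i+l)) = (\<Sum>i\<le>n. \<Sum>p\<in>{p. p \<in> {..n} \<and> i \<le> p}. g i p)"
    by (rule sum.cong[OF refl]) (simp add: 1)
  also have "\<dots> = (\<Sum>p\<le>n. \<Sum>i\<in>{i. i \<in> {..n} \<and> i \<le> p}. g i p)"
    by (rule sum.swap_restrict) auto
  also have "\<dots> = (\<Sum>p\<le>n. \<Sum>i\<le>p. g i p)"
    by (intro sum.cong) auto
  finally show ?thesis .
qed

lemma vander_real:
  fixes a b :: real
  shows "(\<Sum>k\<le>n. (a gchoose k) * (b gchoose (n - k))) = (a + b) gchoose n"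
  using gbinomial_Vandermonde[of a b n] by (simp add: atMost_atLeast0)

lemma nat_step_I1:
  assumes "p \<le> n"
  shows "(\<Sum>i\<le>p. (Suc p choose Suc i) * (B choose i)) * (B+n+1 choose (n-p))
         = (B+n+1 choose n) * (n choose p)"
proof -
  have "(\<Sum>i\<le>p. (Suc p choose Suc i) * (B choose i)) = (\<Sum>i\<le>p. (B choose i) * (Suc p choose (p - i)))"
  proof (rule sum.cong[OF refl])
    fix i assume "i \<in> {..p}"
    then have "Suc p choose Suc i = Suc p choose (p - i)"
      using binomial_symmetric[of "Suc i" "Suc p"] by simp
    then show "(Suc p choose Suc i) * (B choose i) = (B choose i) * (Suc p choose (p - i))" by simp
  qed
  also have "\<dots> = (B + Suc p) choose p"
    using binomial_Vandermonde[of B "Suc p" p] by (simp add: atMost_atLeast0)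
  finally have s: "(\<Sum>i\<le>p. (Suc p choose Suc i) * (B choose i)) = (B + p + 1 choose p)" by simp
  have e1: "(B+p+1 choose p) = (B+p+1 choose (B+1))"
    using binomial_symmetric[of p "B+p+1"] by simp
  have e2: "(B+n+1 choose (n-p)) = (B+n+1 choose (B+p+1))"
    using binomial_symmetric[of "n-p" "B+n+1"] assms by simp
  have e3: "(B+n+1 choose n) = (B+n+1 choose (B+1))"
    using binomial_symmetric[of n "B+n+1"] by simp
  have "(B+n+1 choose (B+p+1)) * (B+p+1 choose (B+1)) = (B+n+1 choose (B+1)) * ((B+n+1-(B+1)) choose (B+p+1-(B+1)))"
    by (rule choose_mult) (use assms in auto)
  then show ?thesis using s e1 e2 e3 by (simp add: mult.commute)
qed

lemma final_vander_I1:
  fixes A :: real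
  shows "(\<Sum>p\<le>n. (A gchoose Suc p) * of_nat (n choose p)) = (A + of_nat n) gchoose Suc n"
proof -
  have "(A + of_nat n) gchoose Suc n = (\<Sum>k\<le>Suc n. (A gchoose k) * (of_nat n gchoose (Suc n - k)))"
    using vander_real[of A "of_nat n" "Suc n"] by simp
  also have "\<dots> = (A gchoose 0) * (of_nat n gchoose Suc n) + (\<Sum>p\<le>n. (A gchoose Suc p) * (of_nat n gchoose (n - p)))"
    by (subst sum.atMost_Suc_shift) simp
  also have "\<dots> = (\<Sum>p\<le>n. (A gchoose Suc p) * of_nat (n choose p))"
  proof -
    have "(of_nat n gchoose Suc n :: real) = 0" by (simp add: binomial_gbinomial[symmetric])
    moreover have "(of_nat n gchoose (n - p) :: real) = of_nat (n choose p)" if "p \<le> n" for p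
      using that by (simp add: binomial_gbinomial[symmetric] binomial_symmetric[symmetric])
    ultimately show ?thesis by simp
  qed
  finally show ?thesis by simp
qed

lemma I1r:
  fixes A :: real
  shows "(\<Sum>i\<le>n. (A gchoose Suc i) * of_nat (B choose i) * ((A + of_nat B + of_nat n - of_nat i) gchoose (n - i)))
     = of_nat (B+n+1 choose n) * ((A + of_nat n) gchoose Suc n)"
proof -
  define g where "g i p = (A gchoose Suc p) * (of_nat (Suc p) gchoose Suc i) * of_nat (B choose i) * (of_nat (B+n+1) gchoose (n-p)) " for i p
  have step: "(A gchoose Suc i) * of_nat (B choose i) * ((A + of_nat B + of_nat n - of_nat i) gchoose (n - i))
      = (\<Sum>l\<le>n-i. g i (i+l))" if "i \<le> n" for i
  proof -
    have v: "(A + of_nat B + of_nat n - of_nat i) gchoose (n - i)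
       = (\<Sum>l\<le>n-i. ((A - of_nat (Suc i)) gchoose l) * (of_nat (B+n+1) gchoose (n - i - l)))"
    proof -
      have eq: "A - of_nat (Suc i) + of_nat (B+n+1) = A + of_nat B + of_nat n - of_nat i" by simp
      show ?thesis using vander_real[of "A - of_nat (Suc i)" "of_nat (B+n+1)" "n-i", unfolded eq] by simp
    qed
    have t: "(A gchoose Suc i) * ((A - of_nat (Suc i)) gchoose l) = (A gchoose (Suc i + l)) * (of_nat (Suc i + l) gchoose Suc i)" for l
      using gbinomial_trinomial_revision[of "Suc i" "Suc i + l" A] by simp
    have "(A gchoose Suc i) * of_nat (B choose i) * ((A + of_nat B + of_nat n - of_nat i) gchoose (n - i))
       = (\<Sum>l\<le>n-i. ((A gchoose Suc i) * ((A - of_nat (Suc i)) gchoose l)) * of_nat (B choose i) * (of_nat (B+n+1) gchoose (n - i - l)))"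
      unfolding v sum_distrib_left by (rule sum.cong[OF refl]) (simp add: algebra_simps)
    also have "\<dots> = (\<Sum>l\<le>n-i. g i (i+l))"
      unfolding t g_def
    proof (rule sum.cong[OF refl])
      fix l
      have "Suc i + l = Suc (i + l)" "n - i - l = n - (i + l)" by auto
      then show "(A gchoose (Suc i + l)) * (of_nat (Suc i + l) gchoose Suc i) * of_nat (B choose i) * (of_nat (B + n + 1) gchoose (n - i - l)) =
         (A gchoose Suc (i + l)) * (of_nat (Suc (i + l)) gchoose Suc i) * of_nat (B choose i) * (of_nat (B + n + 1) gchoose (n - (i + l)))"
        by (simp only:)
    qed
    finally show ?thesis .
  qed
  have "(\<Sum>i\<le>n. (A gchoose Suc i) * of_nat (B choose i) * ((A + of_nat B + of_nat n - of_nat i) gchoose (n - i)))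
     = (\<Sum>i\<le>n. \<Sum>l\<le>n-i. g i (i+l))"
    by (rule sum.cong[OF refl]) (simp add: step)
  also have "\<dots> = (\<Sum>p\<le>n. \<Sum>i\<le>p. g i p)" by (rule tri_swap)
  also have "\<dots> = (\<Sum>p\<le>n. (A gchoose Suc p) * of_nat ((\<Sum>i\<le>p. (Suc p choose Suc i) * (B choose i)) * (B+n+1 choose (n-p))))"
    unfolding g_def by (rule sum.cong[OF refl]) (simp only: binomial_gbinomial of_nat_mult of_nat_sum sum_distrib_left sum_distrib_right mult_ac)
  also have "\<dots> = (\<Sum>p\<le>n. (A gchoose Suc p) * of_nat ((B+n+1 choose n) * (n choose p)))"
  proof (rule sum.cong[OF refl])
    fix p assume "p \<in> {..n}"
    then have "p \<le> n" by simp
    then show "(A gchoose Suc p) * of_nat ((\<Sum>i\<le>p. (Suc p choose Suc i) * (B choose i)) * (B+n+1 choose (n-p)))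
      = (A gchoose Suc p) * of_nat ((B+n+1 choose n) * (n choose p))"
      using nat_step_I1[of p n B] by (simp only:)
  qed
  also have "\<dots> = of_nat (B+n+1 choose n) * (\<Sum>p\<le>n. (A gchoose Suc p) * of_nat (n choose p))"
    by (simp add: sum_distrib_left algebra_simps)
  also have "\<dots> = of_nat (B+n+1 choose n) * ((A + of_nat n) gchoose Suc n)"
    by (simp add: final_vander_I1)
  finally show ?thesis .
qed

lemma nat_step_S2:
  assumes "p \<le> n"
  shows "(\<Sum>i\<le>p. (p choose i) * (B choose Suc i)) * (B+n choose (n-p))
         = (B+n choose Suc n) * (Suc n choose Suc p)"
proof -
  have "(\<Sum>k\<le>Suc p. (B choose k) * (p choose (Suc p - k))) = (B + p) choose Suc p"
    using binomial_Vandermonde[of B p "Suc p"] by (simp add: atMost_atLeast0)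
  moreover have "(\<Sum>k\<le>Suc p. (B choose k) * (p choose (Suc p - k))) = (\<Sum>i\<le>p. (p choose i) * (B choose Suc i))"
  proof -
    have "(\<Sum>k\<le>Suc p. (B choose k) * (p choose (Suc p - k))) = (B choose 0) * (p choose Suc p) + (\<Sum>i\<le>p. (B choose Suc i) * (p choose (p - i)))"
      by (subst sum.atMost_Suc_shift) simp
    also have "\<dots> = (\<Sum>i\<le>p. (p choose i) * (B choose Suc i))"
    proof -
      have "(p choose (p - i)) = (p choose i)" if "i \<le> p" for i
        using that binomial_symmetric[of i p] by simp
      then show ?thesis by (simp add: mult.commute)
    qed
    finally show ?thesis .
  qed
  ultimately have s: "(\<Sum>i\<le>p. (p choose i) * (B choose Suc i)) = (B + p) choose Suc p" by simp
  show ?thesis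
  proof (cases B)
    case 0
    then show ?thesis using s by simp
  next
    case (Suc Bp)
    have e1: "(B+p choose Suc p) = (B+p choose Bp)"
      using binomial_symmetric[of "Suc p" "B+p"] Suc by simp
    have e2: "(B+n choose (n-p)) = (B+n choose (B+p))"
      using binomial_symmetric[of "n-p" "B+n"] assms by simp
    have e3: "(B+n choose Suc n) = (B+n choose Bp)"
      using binomial_symmetric[of "Suc n" "B+n"] Suc by simp
    have "(B+n choose (B+p)) * (B+p choose Bp) = (B+n choose Bp) * ((B+n-Bp) choose (B+p-Bp))"
      by (rule choose_mult) (use assms Suc in auto)
    moreover have "B+n-Bp = Suc n" "B+p-Bp = Suc p" using Suc by auto
    ultimately show ?thesis using s e1 e2 e3 by (simp add: mult.commute)
  qed
qed

lemma final_vander_S2: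
  fixes A :: real
  shows "(\<Sum>p\<le>n. (A gchoose p) * of_nat (Suc n choose Suc p)) = (A + of_nat n + 1) gchoose n"
proof -
  have "(A + of_nat (Suc n)) gchoose n = (\<Sum>k\<le>n. (A gchoose k) * (of_nat (Suc n) gchoose (n - k)))"
    using vander_real[of A "of_nat (Suc n)" n] by simp
  also have "\<dots> = (\<Sum>p\<le>n. (A gchoose p) * of_nat (Suc n choose Suc p))"
  proof (rule sum.cong[OF refl])
    fix p assume "p \<in> {..n}"
    then have "Suc n choose (n - p) = Suc n choose Suc p"
      using binomial_symmetric[of "Suc p" "Suc n"] by simp
    then show "(A gchoose p) * (of_nat (Suc n) gchoose (n - p)) = (A gchoose p) * of_nat (Suc n choose Suc p)"
      by (simp only: binomial_gbinomial[symmetric])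
  qed
  finally have X: "(A + of_nat (Suc n)) gchoose n = (\<Sum>p\<le>n. (A gchoose p) * of_nat (Suc n choose Suc p))" .
  have eq: "A + of_nat (Suc n) = A + of_nat n + 1" by simp
  show ?thesis using X unfolding eq by (rule sym)
qed

lemma S2r:
  fixes A :: real
  shows "(\<Sum>i\<le>n. (A gchoose i) * of_nat (B choose Suc i) * ((A + of_nat B + of_nat n - of_nat i) gchoose (n - i)))
     = of_nat (B+n choose Suc n) * ((A + of_nat n + 1) gchoose n)"
proof -
  define g where "g i p = (A gchoose p) * (of_nat p gchoose i) * of_nat (B choose Suc i) * (of_nat (B+n) gchoose (n-p)) " for i p
  have step: "(A gchoose i) * of_nat (B choose Suc i) * ((A + of_nat B + of_nat n - of_nat i) gchoose (n - i))
      = (\<Sum>l\<le>n-i. g i (i+l))" if "i \<le> n" for i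
  proof -
    have v: "(A + of_nat B + of_nat n - of_nat i) gchoose (n - i)
       = (\<Sum>l\<le>n-i. ((A - of_nat i) gchoose l) * (of_nat (B+n) gchoose (n - i - l)))"
    proof -
      have eq: "A - of_nat i + of_nat (B+n) = A + of_nat B + of_nat n - of_nat i" by simp
      show ?thesis using vander_real[of "A - of_nat i" "of_nat (B+n)" "n-i", unfolded eq] by simp
    qed
    have t: "(A gchoose i) * ((A - of_nat i) gchoose l) = (A gchoose (i + l)) * (of_nat (i + l) gchoose i)" for l
      using gbinomial_trinomial_revision[of "i" "i + l" A] by simp
    have "(A gchoose i) * of_nat (B choose Suc i) * ((A + of_nat B + of_nat n - of_nat i) gchoose (n - i))
       = (\<Sum>l\<le>n-i. ((A gchoose i) * ((A - of_nat i) gchoose l)) * of_nat (B choose Suc i) * (of_nat (B+n) gchoose (n - i - l)))"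
      unfolding v sum_distrib_left by (rule sum.cong[OF refl]) (simp add: algebra_simps)
    also have "\<dots> = (\<Sum>l\<le>n-i. g i (i+l))"
      unfolding t g_def
    proof (rule sum.cong[OF refl])
      fix l
      have "n - i - l = n - (i + l)" by auto
      then show "(A gchoose (i + l)) * (of_nat (i + l) gchoose i) * of_nat (B choose Suc i) * (of_nat (B + n) gchoose (n - i - l)) =
         (A gchoose (i + l)) * (of_nat (i + l) gchoose i) * of_nat (B choose Suc i) * (of_nat (B + n) gchoose (n - (i + l)))"
        by (simp only:)
    qed
    finally show ?thesis .
  qed
  have "(\<Sum>i\<le>n. (A gchoose i) * of_nat (B choose Suc i) * ((A + of_nat B + of_nat n - of_nat i) gchoose (n - i)))
     = (\<Sum>i\<le>n. \<Sum>l\<le>n-i. g i (i+l))"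
    by (rule sum.cong[OF refl]) (simp add: step)
  also have "\<dots> = (\<Sum>p\<le>n. \<Sum>i\<le>p. g i p)" by (rule tri_swap)
  also have "\<dots> = (\<Sum>p\<le>n. (A gchoose p) * of_nat ((\<Sum>i\<le>p. (p choose i) * (B choose Suc i)) * (B+n choose (n-p))))"
    unfolding g_def by (rule sum.cong[OF refl]) (simp only: binomial_gbinomial of_nat_mult of_nat_sum sum_distrib_left sum_distrib_right mult_ac)
  also have "\<dots> = (\<Sum>p\<le>n. (A gchoose p) * of_nat ((B+n choose Suc n) * (Suc n choose Suc p)))"
  proof (rule sum.cong[OF refl])
    fix p assume "p \<in> {..n}"
    then have "p \<le> n" by simp
    then show "(A gchoose p) * of_nat ((\<Sum>i\<le>p. (p choose i) * (B choose Suc i)) * (B+n choose (n-p)))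
      = (A gchoose p) * of_nat ((B+n choose Suc n) * (Suc n choose Suc p))"
      using nat_step_S2[of p n B] by (simp only:)
  qed
  also have "\<dots> = of_nat (B+n choose Suc n) * (\<Sum>p\<le>n. (A gchoose p) * of_nat (Suc n choose Suc p))"
    by (simp only: of_nat_mult sum_distrib_left mult_ac)
  also have "\<dots> = of_nat (B+n choose Suc n) * ((A + of_nat n + 1) gchoose n)"
    by (simp only: final_vander_S2)
  finally show ?thesis .
qed



lemma gbinom_real: "real_of_int (gbinom x k) = real_of_int x gchoose k"
proof -
  obtain G where G1: "fact k * G = (\<Prod>i=0..<k. x - int i)" and G2: "real_of_int G = real_of_int x gchoose k"
    using gbinomial_int_mult_fact[of k x] of_int_gbinomial[of x k, where 'a=real] by blast
  have "gbinom x k = (fact k * G) div fact k"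
    unfolding gbinom_def G1 by (simp add: atLeast0LessThan)
  also have "\<dots> = G" by simp
  finally show ?thesis using G2 by simp
qed

lemma gbinom_0 [simp]: "gbinom x 0 = 1"
  by (simp add: gbinom_def)

lemma sum_atMost_rev: "(\<Sum>a\<le>n. (f :: nat \<Rightarrow> 'a::comm_monoid_add) a) = (\<Sum>i\<le>n. f (n - i))"
  using sum.atLeastAtMost_rev[of f 0 n] by (simp add: atMost_atLeast0)

lemma fsum_bound:
  assumes "\<And>n. n > B \<Longrightarrow> f n = 0"
  shows "fsum f = (\<Sum>n\<le>B. f n)"
proof -
  have "{n. f n \<noteq> 0} \<subseteq> {..B}" using assms by (auto simp: not_less[symmetric])
  then show ?thesis unfolding fsum_def by (intro sum.mono_neutral_left) auto
qed

lemma fprod_bound: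
  assumes "\<And>n. n > B \<Longrightarrow> g n = 1"
  shows "fprod_pos g = (\<Prod>n\<in>{1..B}. g n)"
proof -
  have "{n. 1 \<le> n \<and> g n \<noteq> 1} \<subseteq> {1..B}" using assms by (auto simp: not_less[symmetric])
  then show ?thesis unfolding fprod_pos_def by (intro prod.mono_neutral_left) auto
qed

lemma sum_ext_bound:
  fixes B B' :: nat
  assumes "\<And>k. k > B \<Longrightarrow> f k = 0" "B \<le> B'"
  shows "(\<Sum>k\<le>B'. f k) = (\<Sum>k\<le>B. f k)"
proof (rule sum.mono_neutral_right)
  show "finite {..B'}" by simp
  show "{..B} \<subseteq> {..B'}" using assms(2) by auto
  show "\<forall>i\<in>{..B'} - {..B}. f i = 0" using assms(1) by auto
qed

definition V :: "int \<Rightarrow> (nat \<Rightarrow> nat) \<Rightarrow> nat \<Rightarrow> int" where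
  "V X m n = X + 2 * fsum (\<lambda>k. if n < k then (int k - int n) * int (m k) else 0)"

definition wt :: "int \<Rightarrow> int \<Rightarrow> int \<Rightarrow> (nat \<Rightarrow> nat) \<Rightarrow> int" where
  "wt c X t m = fprod_pos (\<lambda>n. gbinom (V X m n + int (m n) + c * int n + t) (m n))"

definition FJ :: "nat \<Rightarrow> nat \<Rightarrow> (nat \<Rightarrow> nat) set" where
  "FJ K J = {m. m 0 = 0 \<and> (\<forall>n>K. m n = 0) \<and> (\<Sum>n\<le>K. n * m n) = K \<and> (\<Sum>n\<le>K. m n) = J}"

definition T :: "int \<Rightarrow> int \<Rightarrow> int \<Rightarrow> nat \<Rightarrow> nat \<Rightarrow> int" where
  "T c X t K J = (\<Sum>m\<in>FJ K J. wt c X t m)"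

definition glue :: "nat \<Rightarrow> (nat \<Rightarrow> nat) \<Rightarrow> nat \<Rightarrow> nat" where
  "glue a m n = (case n of 0 \<Rightarrow> 0 | Suc k \<Rightarrow> (if k = 0 then a else m k))"

definition shift :: "(nat \<Rightarrow> nat) \<Rightarrow> nat \<Rightarrow> nat" where
  "shift m k = (if k = 0 then 0 else m (Suc k))"

lemma V_bound:
  assumes "\<And>k. k > B \<Longrightarrow> m k = 0"
  shows "V X m n = X + 2 * (\<Sum>k\<le>B. if n < k then (int k - int n) * int (m k) else 0)"
  unfolding V_def by (subst fsum_bound[of B]) (use assms in auto)

lemma wt_bound:
  assumes "\<And>k. k > B \<Longrightarrow> m k = 0"
  shows "wt c X t m = (\<Prod>n\<in>{1..B}. gbinom (V X m n + int (m n) + c * int n + t) (m n))"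
  unfolding wt_def by (rule fprod_bound) (use assms in auto)

lemma glue_bound:
  assumes "\<And>k. k > B \<Longrightarrow> m k = 0"
  shows "\<And>k. k > Suc B \<Longrightarrow> glue a m k = 0"
  using assms by (auto simp: glue_def split: nat.split)

lemma V_glue_Suc:
  assumes "\<And>k. k > B \<Longrightarrow> m k = 0"
  shows "V X (glue a m) (Suc n) = V X m n"
proof -
  have "V X (glue a m) (Suc n) = X + 2 * (\<Sum>k\<le>Suc B. if Suc n < k then (int k - int (Suc n)) * int (glue a m k) else 0)"
    by (rule V_bound) (rule glue_bound[OF assms])
  also have "(\<Sum>k\<le>Suc B. if Suc n < k then (int k - int (Suc n)) * int (glue a m k) else 0)
      = (\<Sum>k\<le>B. if n < k then (int k - int n) * int (m k) else 0)"
    by (subst sum.atMost_Suc_shift) (auto simp: glue_def intro!: sum.cong)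
  finally show ?thesis using V_bound[OF assms] by simp
qed

lemma V_glue_1:
  assumes "\<And>k. k > B \<Longrightarrow> m k = 0" "m 0 = 0"
  shows "V X (glue a m) 1 = X + 2 * int (\<Sum>k\<le>B. k * m k)"
proof -
  have "V X (glue a m) 1 = V X m 0" using V_glue_Suc[OF assms(1)] by simp
  also have "\<dots> = X + 2 * (\<Sum>k\<le>B. if 0 < k then (int k - int 0) * int (m k) else 0)"
    by (rule V_bound) (use assms in auto)
  also have "(\<Sum>k\<le>B. if 0 < k then (int k - int 0) * int (m k) else 0) = int (\<Sum>k\<le>B. k * m k)"
    unfolding of_nat_sum by (rule sum.cong) (use assms in auto)
  finally show ?thesis .
qed

lemma wt_glue:
  assumes "\<And>k. k > B \<Longrightarrow> m k = 0" "m 0 = 0"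
  shows "wt c X t (glue a m) = gbinom (X + 2 * int (\<Sum>k\<le>B. k * m k) + int a + c + t) a * wt c X (t + c) m"
proof -
  define G where "G n = gbinom (V X (glue a m) n + int (glue a m n) + c * int n + t) (glue a m n)" for n
  have "wt c X t (glue a m) = (\<Prod>n\<in>{1..Suc B}. G n)"
    unfolding G_def by (rule wt_bound) (rule glue_bound[OF assms(1)])
  also have "\<dots> = G 1 * (\<Prod>n\<in>{Suc 1..Suc B}. G n)"
    by (subst prod.atLeast_Suc_atMost) auto
  also have "(\<Prod>n\<in>{Suc 1..Suc B}. G n) = (\<Prod>n\<in>{1..B}. G (Suc n))"
    by (rule prod.shift_bounds_cl_Suc_ivl)
  also have "\<dots> = (\<Prod>n\<in>{1..B}. gbinom (V X m n + int (m n) + c * int n + (t + c)) (m n))"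
  proof (rule prod.cong[OF refl])
    fix n assume "n \<in> {1..B}"
    have "V X (glue a m) (Suc n) = V X m n" by (rule V_glue_Suc[OF assms(1)])
    with \<open>n \<in> {1..B}\<close> show "G (Suc n) = gbinom (V X m n + int (m n) + c * int n + (t + c)) (m n)"
      unfolding G_def by (auto simp: glue_def algebra_simps)
  qed
  also have "\<dots> = wt c X (t + c) m" by (rule wt_bound[symmetric]) (use assms in auto)
  also have "G 1 = gbinom (X + 2 * int (\<Sum>k\<le>B. k * m k) + int a + c + t) a"
  proof -
    have "V X (glue a m) 1 = X + 2 * int (\<Sum>k\<le>B. k * m k)" by (rule V_glue_1[of B m, OF assms])
    moreover have "glue a m 1 = a" by (simp add: glue_def)
    ultimately show ?thesis unfolding G_def by simp
  qed
  finally show ?thesis .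
qed



lemma glue_1: "glue a m 1 = a" by (simp add: glue_def)
lemma glue_0: "glue a m 0 = 0" by (simp add: glue_def)

lemma glue_Suc: "m 0 = 0 \<Longrightarrow> glue a m (Suc k) = m k + (if k = 0 then a else 0)"
  by (simp add: glue_def)

lemma glue_sums:
  assumes "m 0 = 0"
  shows "(\<Sum>n\<le>Suc B. n * glue a m n) = a + (\<Sum>k\<le>B. k * m k) + (\<Sum>k\<le>B. m k)"
    and "(\<Sum>n\<le>Suc B. glue a m n) = a + (\<Sum>k\<le>B. m k)"
proof -
  have "(\<Sum>n\<le>Suc B. n * glue a m n) = (\<Sum>k\<le>B. Suc k * (m k + (if k = 0 then a else 0)))"
    by (subst sum.atMost_Suc_shift) (simp add: glue_Suc[of m, OF assms] glue_0)
  also have "\<dots> = (\<Sum>k\<le>B. k * m k) + (\<Sum>k\<le>B. m k) + (\<Sum>k\<le>B. if k = 0 then a else 0)"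
    by (simp add: sum.distrib algebra_simps if_distrib[of "\<lambda>x. Suc k * x" for k] cong: if_cong)
  also have "(\<Sum>k\<le>B. if k = 0 then a else 0) = a" by simp
  finally show "(\<Sum>n\<le>Suc B. n * glue a m n) = a + (\<Sum>k\<le>B. k * m k) + (\<Sum>k\<le>B. m k)" by simp
  have "(\<Sum>n\<le>Suc B. glue a m n) = (\<Sum>k\<le>B. (m k + (if k = 0 then a else 0)))"
    by (subst sum.atMost_Suc_shift) (simp add: glue_Suc[of m, OF assms] glue_0)
  also have "\<dots> = a + (\<Sum>k\<le>B. m k)" by (simp add: sum.distrib)
  finally show "(\<Sum>n\<le>Suc B. glue a m n) = a + (\<Sum>k\<le>B. m k)" .
qed

lemma glue_shift: "m 0 = 0 \<Longrightarrow> glue (m 1) (shift m) = m"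
  by (rule ext) (auto simp: glue_def shift_def split: nat.split)

lemma shift_glue: "m 0 = 0 \<Longrightarrow> shift (glue a m) = m"
  by (rule ext) (auto simp: glue_def shift_def)


lemma FJ_le:
  assumes "m \<in> FJ K J" "n \<le> K"
  shows "n * m n \<le> K"
proof -
  have "n * m n \<le> (\<Sum>n\<le>K. n * m n)" using assms(2) by (intro member_le_sum) auto
  then show ?thesis using assms(1) by (simp add: FJ_def)
qed

lemma FJ_finite: "finite (FJ K J)"
proof -
  let ?S = "{m::nat\<Rightarrow>nat. \<forall>n. m n \<le> K \<and> (K < n \<longrightarrow> m n = 0)}"
  have "?S \<subseteq> (\<lambda>f n. if n \<le> K then f n else 0) ` (PiE {..K} (\<lambda>_. {..K}))"
  proof
    fix m assume m: "m \<in> ?S"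
    have "m = (\<lambda>n. if n \<le> K then restrict m {..K} n else 0)" using m by (auto simp: fun_eq_iff)
    moreover have "restrict m {..K} \<in> PiE {..K} (\<lambda>_. {..K})" using m by auto
    ultimately show "m \<in> (\<lambda>f n. if n \<le> K then f n else 0) ` (PiE {..K} (\<lambda>_. {..K}))" by blast
  qed
  then have fin: "finite ?S" by (rule finite_subset) (intro finite_imageI finite_PiE; simp)
  have "FJ K J \<subseteq> ?S"
  proof
    fix m assume m: "m \<in> FJ K J"
    have "m n \<le> K" for n
    proof (cases "n = 0")
      case True then show ?thesis using m by (simp add: FJ_def)
    next
      case False
      show ?thesis
      proof (cases "n \<le> K")
        case True
        then have "n * m n \<le> K" by (rule FJ_le[OF m])
        moreover have "1 * m n \<le> n * m n" using False by (intro mult_le_mono1) simp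
        ultimately show ?thesis by linarith
      next
        case False then show ?thesis using m by (simp add: FJ_def)
      qed
    qed
    then show "m \<in> ?S" using m by (simp add: FJ_def)
  qed
  then show ?thesis using fin by (rule finite_subset)
qed

lemma FJ_K0: "FJ 0 J = (if J = 0 then {\<lambda>_. 0} else {})"
proof -
  have "m \<in> FJ 0 J \<longleftrightarrow> J = 0 \<and> m = (\<lambda>_. 0)" for m
  proof
    assume "m \<in> FJ 0 J"
    then have "m 0 = 0" "\<forall>n>0. m n = 0" "m 0 = J" by (auto simp: FJ_def)
    then show "J = 0 \<and> m = (\<lambda>_. 0)" by (auto simp: fun_eq_iff) (metis neq0_conv)
  next
    assume "J = 0 \<and> m = (\<lambda>_. 0)" then show "m \<in> FJ 0 J" by (simp add: FJ_def)
  qed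
  then show ?thesis by auto
qed

lemma wt_zero: "wt c X t (\<lambda>_. 0) = 1"
  unfolding wt_def fprod_pos_def by simp

lemma T_K0: "T c X t 0 J = (if J = 0 then 1 else 0)"
  unfolding T_def FJ_K0 by (simp add: wt_zero)

lemma FJ_sum_le:
  fixes m :: "nat \<Rightarrow> nat" and K :: nat
  assumes "m 0 = 0"
  shows "(\<Sum>n\<le>K. m n) \<le> (\<Sum>n\<le>K. n * m n)"
proof (rule sum_mono)
  fix n assume "n \<in> {..K}"
  show "m n \<le> n * m n" using assms by (cases n) auto
qed

lemma FJ_empty_big: "K < J \<Longrightarrow> FJ K J = {}"
proof -
  assume KJ: "K < J"
  have False if m: "m \<in> FJ K J" for m
  proof -
    have "(\<Sum>n\<le>K. m n) = J" "(\<Sum>n\<le>K. n * m n) = K" "m 0 = 0" using m unfolding FJ_def by blast+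
    then show False using FJ_sum_le[of m K] KJ by simp
  qed
  then show ?thesis by blast
qed

lemma FJ_empty_J0: "0 < K \<Longrightarrow> FJ K 0 = {}"
proof -
  assume K: "0 < K"
  have False if m: "m \<in> FJ K 0" for m
  proof -
    have s: "(\<Sum>n\<le>K. m n) = 0" using m unfolding FJ_def by blast
    have z: "\<forall>n\<le>K. m n = 0" using s by simp
    have s0: "(\<Sum>n\<le>K. n * m n) = 0" by (rule sum.neutral) (use z in auto)
    have "(\<Sum>n\<le>K. n * m n) = K" using m unfolding FJ_def by blast
    then show False using s0 K by simp
  qed
  then show ?thesis by blast
qed

lemma T_empty_big: "K < J \<Longrightarrow> T c X t K J = 0"
  by (simp add: T_def FJ_empty_big)

lemma T_J0: "0 < K \<Longrightarrow> T c X t K 0 = 0"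
  by (simp add: T_def FJ_empty_J0)



lemma FJ_glue_mem:
  assumes J1: "1 \<le> J" and JK: "J \<le> K" and a: "a \<le> J" and m: "m \<in> FJ (K-J) (J-a)"
  shows "glue a m \<in> FJ K J"
proof -
  obtain K0 where K0: "K = Suc K0" using J1 JK by (cases K) auto
  have m0: "m 0 = 0" and mb: "\<And>n. n > K - J \<Longrightarrow> m n = 0"
    and s1: "(\<Sum>n\<le>K-J. n * m n) = K - J" and s0: "(\<Sum>n\<le>K-J. m n) = J - a"
    using m unfolding FJ_def by blast+
  have KJ: "K - J \<le> K0" using K0 J1 by simp
  have s1': "(\<Sum>k\<le>K0. k * m k) = K - J"
    using sum_ext_bound[of "K-J" "\<lambda>k. k * m k" K0] mb KJ s1 by simp
  have s0': "(\<Sum>k\<le>K0. m k) = J - a"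
    using sum_ext_bound[of "K-J" "\<lambda>k. m k" K0] mb KJ s0 by simp
  have "glue a m 0 = 0" by (rule glue_0)
  moreover have "\<forall>n>K. glue a m n = 0"
  proof (intro allI impI)
    fix n assume "K < n"
    then have "n > Suc (K - J)" using J1 JK by simp
    then show "glue a m n = 0" using glue_bound[of "K-J" m, OF mb] by blast
  qed
  moreover have "(\<Sum>n\<le>K. n * glue a m n) = K"
    unfolding K0 glue_sums(1)[where m=m, OF m0] using s1' s0' K0 a JK by simp
  moreover have "(\<Sum>n\<le>K. glue a m n) = J"
    unfolding K0 glue_sums(2)[where m=m, OF m0] using s0' a by simp
  ultimately show ?thesis unfolding FJ_def by blast
qed

lemma FJ_shift_mem:
  assumes J1: "1 \<le> J" and JK: "J \<le> K" and m: "m \<in> FJ K J"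
  shows "m 1 \<le> J" and "shift m \<in> FJ (K-J) (J - m 1)"
proof -
  obtain K0 where K0: "K = Suc K0" using J1 JK by (cases K) auto
  have m0: "m 0 = 0" and mb: "\<And>n. n > K \<Longrightarrow> m n = 0"
    and s1: "(\<Sum>n\<le>K. n * m n) = K" and s0: "(\<Sum>n\<le>K. m n) = J"
    using m unfolding FJ_def by blast+
  have sh0: "shift m 0 = 0" by (simp add: shift_def)
  have g: "glue (m 1) (shift m) = m" by (rule glue_shift[where m=m, OF m0])
  have e1: "K = m 1 + (\<Sum>k\<le>K0. k * shift m k) + (\<Sum>k\<le>K0. shift m k)"
    using glue_sums(1)[where m="shift m" and B=K0 and a="m 1", OF sh0] s1 unfolding g K0 by simp
  have e0: "J = m 1 + (\<Sum>k\<le>K0. shift m k)"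
    using glue_sums(2)[where m="shift m" and B=K0 and a="m 1", OF sh0] s0 unfolding g K0 by simp
  show "m 1 \<le> J" using e0 by simp
  have S1: "(\<Sum>k\<le>K0. k * shift m k) = K - J" using e1 e0 by simp
  have S0: "(\<Sum>k\<le>K0. shift m k) = J - m 1" using e0 by simp
  have KJ: "K - J \<le> K0" using K0 J1 by simp
  have shb: "shift m k = 0" if "k > K - J" for k
  proof (rule ccontr)
    assume nz: "shift m k \<noteq> 0"
    have "k \<le> K0"
    proof (rule ccontr)
      assume "\<not> k \<le> K0"
      then have "Suc k > K" using K0 by simp
      then have "m (Suc k) = 0" using mb by blast
      then show False using nz by (auto simp: shift_def split: if_splits)
    qed
    then have "k * shift m k \<le> (\<Sum>k\<le>K0. k * shift m k)" by (intro member_le_sum) auto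
    moreover have "k \<le> k * shift m k" using nz by simp
    ultimately show False using S1 that by simp
  qed
  have "(\<Sum>k\<le>K-J. k * shift m k) = K - J"
    using sum_ext_bound[of "K-J" "\<lambda>k. k * shift m k" K0] shb KJ S1 by simp
  moreover have "(\<Sum>k\<le>K-J. shift m k) = J - m 1"
    using sum_ext_bound[of "K-J" "\<lambda>k. shift m k" K0] shb KJ S0 by simp
  ultimately show "shift m \<in> FJ (K-J) (J - m 1)" unfolding FJ_def using sh0 shb by blast
qed

lemma FJ_decomp:
  assumes J1: "1 \<le> J" and JK: "J \<le> K"
  shows "FJ K J = (\<lambda>(a, m). glue a m) ` (SIGMA a:{..J}. FJ (K-J) (J-a))"
    and "inj_on (\<lambda>(a, m). glue a m) (SIGMA a:{..J}. FJ (K-J) (J-a))"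
proof -
  show "FJ K J = (\<lambda>(a, m). glue a m) ` (SIGMA a:{..J}. FJ (K-J) (J-a))"
  proof
    show "FJ K J \<subseteq> (\<lambda>(a, m). glue a m) ` (SIGMA a:{..J}. FJ (K-J) (J-a))"
    proof
      fix m assume m: "m \<in> FJ K J"
      have m0: "m 0 = 0" using m unfolding FJ_def by blast
      have "(m 1, shift m) \<in> (SIGMA a:{..J}. FJ (K-J) (J-a))"
        using FJ_shift_mem[OF J1 JK m] by auto
      moreover have "m = (\<lambda>(a, m). glue a m) (m 1, shift m)" using glue_shift[where m=m, OF m0] by simp
      ultimately show "m \<in> (\<lambda>(a, m). glue a m) ` (SIGMA a:{..J}. FJ (K-J) (J-a))" by blast
    qed
    show "(\<lambda>(a, m). glue a m) ` (SIGMA a:{..J}. FJ (K-J) (J-a)) \<subseteq> FJ K J"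
      using FJ_glue_mem[OF J1 JK] by auto
  qed
  show "inj_on (\<lambda>(a, m). glue a m) (SIGMA a:{..J}. FJ (K-J) (J-a))"
  proof (rule inj_onI)
    fix x y assume x: "x \<in> (SIGMA a:{..J}. FJ (K-J) (J-a))" and y: "y \<in> (SIGMA a:{..J}. FJ (K-J) (J-a))"
      and e: "(\<lambda>(a, m). glue a m) x = (\<lambda>(a, m). glue a m) y"
    obtain a m where xa: "x = (a, m)" by (cases x)
    obtain b n where yb: "y = (b, n)" by (cases y)
    have m0: "m 0 = 0" using x xa unfolding FJ_def by blast
    have n0: "n 0 = 0" using y yb unfolding FJ_def by blast
    have "glue a m = glue b n" using e xa yb by simp
    then have "glue a m 1 = glue b n 1" "shift (glue a m) = shift (glue b n)" by simp_all
    then have "a = b" "m = n" using shift_glue[where m=m, OF m0] shift_glue[where m=n, OF n0]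
      by (simp_all only: glue_1)
    then show "x = y" using xa yb by simp
  qed
qed

lemma T_rec:
  assumes J1: "1 \<le> J" and JK: "J \<le> K"
  shows "T c X t K J = (\<Sum>a\<le>J. gbinom (X + 2 * int (K - J) + int a + c + t) a * T c X (t + c) (K - J) (J - a))"
proof -
  have "T c X t K J = sum (wt c X t) ((\<lambda>(a, m). glue a m) ` (SIGMA a:{..J}. FJ (K-J) (J-a)))"
    unfolding T_def using FJ_decomp(1)[OF J1 JK] by simp
  also have "\<dots> = sum (wt c X t \<circ> (\<lambda>(a, m). glue a m)) (SIGMA a:{..J}. FJ (K-J) (J-a))"
    by (rule sum.reindex[OF FJ_decomp(2)[OF J1 JK]])
  also have "\<dots> = (\<Sum>a\<le>J. \<Sum>m\<in>FJ (K-J) (J-a). wt c X t (glue a m))"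
    by (simp add: sum.Sigma FJ_finite comp_def split_def)
  also have "\<dots> = (\<Sum>a\<le>J. gbinom (X + 2 * int (K - J) + int a + c + t) a * T c X (t + c) (K - J) (J - a))"
  proof (rule sum.cong[OF refl])
    fix a assume "a \<in> {..J}"
    have "wt c X t (glue a m) = gbinom (X + 2 * int (K - J) + int a + c + t) a * wt c X (t + c) m"
      if m: "m \<in> FJ (K-J) (J-a)" for m
    proof -
      have m0: "m 0 = 0" and mb: "\<And>n. n > K - J \<Longrightarrow> m n = 0" and s1: "(\<Sum>n\<le>K-J. n * m n) = K - J"
        using m unfolding FJ_def by blast+
      show ?thesis using wt_glue[of "K-J" m, OF mb m0] s1 by simp
    qed
    then show "(\<Sum>m\<in>FJ (K-J) (J-a). wt c X t (glue a m)) = gbinom (X + 2 * int (K - J) + int a + c + t) a * T c X (t + c) (K - J) (J - a)"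
      unfolding T_def sum_distrib_left by (rule sum.cong[OF refl])
  qed
  finally show ?thesis .
qed



lemma gbinom_inj: "real_of_int a = real_of_int b \<Longrightarrow> a = b" by simp

lemma gbinom_pascal: "gbinom (x + 1) (Suc k) = gbinom x k + gbinom x (Suc k)"
  by (rule gbinom_inj) (simp add: gbinom_real gbinomial_Suc_Suc)

lemma gbinom_nat: "gbinom (int n) k = int (n choose k)"
  by (rule gbinom_inj) (simp add: gbinom_real binomial_gbinomial)

lemma gbinom_vander: "(\<Sum>k\<le>n. gbinom a k * gbinom b (n - k)) = gbinom (a + b) n"
  by (rule gbinom_inj) (simp add: gbinom_real vander_real)

lemma I1i:
  "(\<Sum>i\<le>n. gbinom A (Suc i) * int (B choose i) * gbinom (A + int B + int n - int i) (n - i))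
     = int (B+n+1 choose n) * gbinom (A + int n) (Suc n)"
proof (rule gbinom_inj)
  show "real_of_int (\<Sum>i\<le>n. gbinom A (Suc i) * int (B choose i) * gbinom (A + int B + int n - int i) (n - i))
     = real_of_int (int (B+n+1 choose n) * gbinom (A + int n) (Suc n))"
    using I1r[of "real_of_int A" B n] by (simp add: gbinom_real)
qed

lemma S2i:
  "(\<Sum>i\<le>n. gbinom A i * int (B choose Suc i) * gbinom (A + int B + int n - int i) (n - i))
     = int (B+n choose Suc n) * gbinom (A + int n + 1) n"
proof (rule gbinom_inj)
  show "real_of_int (\<Sum>i\<le>n. gbinom A i * int (B choose Suc i) * gbinom (A + int B + int n - int i) (n - i))
     = real_of_int (int (B+n choose Suc n) * gbinom (A + int n + 1) n)"
    using S2r[of "real_of_int A" B n] by (simp add: gbinom_real)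
qed

definition C1 :: "int \<Rightarrow> int \<Rightarrow> nat \<Rightarrow> nat \<Rightarrow> int" where
  "C1 X t K J = (if K = 0 then (if J = 0 then 1 else 0) else if J = 0 then 0
      else int (K-1 choose (J-1)) * gbinom (X + int K + 1 + t) J)"

definition C0 :: "int \<Rightarrow> nat \<Rightarrow> nat \<Rightarrow> int" where
  "C0 X K J = (if K = 0 then (if J = 0 then 1 else 0) else if J = 0 then 0
      else int (K-1 choose (J-1)) * gbinom (X + int K + 1) J - int (K choose J) * gbinom (X + int K) (J - 1))"

lemma sum_delta_last:
  fixes f :: "nat \<Rightarrow> int"
  shows "(\<Sum>a\<le>J. f a * (if J - a = 0 then 1 else 0)) = f J"
proof -
  have "(\<Sum>a\<le>J. f a * (if J - a = 0 then 1 else 0)) = (\<Sum>a\<le>J. if a = J then f a else 0)"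
    by (rule sum.cong[OF refl]) auto
  also have "\<dots> = f J" by (simp add: sum.delta')
  finally show ?thesis .
qed

lemma sum_drop_last:
  fixes h :: "nat \<Rightarrow> int"
  assumes "h (Suc n) = 0"
  shows "(\<Sum>a\<le>Suc n. h a) = (\<Sum>i\<le>n. h (n - i))"
  using assms by (simp add: sum_atMost_rev[of h n])

lemma T1_closed: "T 1 X t K J = C1 X t K J"
proof (induction K arbitrary: t J rule: less_induct)
  case (less K)
  show ?case
  proof (cases "K = 0")
    case True then show ?thesis by (simp add: T_K0 C1_def)
  next
    case Kpos: False
    show ?thesis
    proof (cases "J = 0")
      case True then show ?thesis using Kpos by (simp add: T_J0 C1_def)
    next
      case Jpos: False
      show ?thesis
      proof (cases "K < J")
        case True
        then have "K - 1 < J - 1" using Kpos by linarith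
        then show ?thesis using True Kpos Jpos by (simp add: T_empty_big C1_def)
      next
        case False
        then have J1: "1 \<le> J" and JK: "J \<le> K" using Jpos by auto
        have rec: "T 1 X t K J = (\<Sum>a\<le>J. gbinom (X + 2 * int (K - J) + int a + 1 + t) a * T 1 X (t + 1) (K - J) (J - a))"
          using T_rec[OF J1 JK, of 1 X t] by simp
        show ?thesis
        proof (cases "K = J")
          case True
          have "T 1 X t K J = (\<Sum>a\<le>J. gbinom (X + 2 * int (K - J) + int a + 1 + t) a * (if J - a = 0 then 1 else 0))"
            unfolding rec using True by (simp add: T_K0)
          also have "\<dots> = gbinom (X + int J + 1 + t) J" using True by (subst sum_delta_last) simp
          finally show ?thesis using True Jpos by (simp add: C1_def)
        next
          case False
          define R where "R = K - J"
          have R1: "1 \<le> R" using False JK by (simp add: R_def)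
          obtain n where n: "J = Suc n" using Jpos by (cases J) auto
          have IH: "T 1 X (t + 1) R (J - a) = C1 X (t + 1) R (J - a)" for a
            using less.IH[of R] R_def J1 JK by simp
          define h where "h a = gbinom (X + 2 * int R + int a + 1 + t) a * C1 X (t + 1) R (J - a)" for a
          have "T 1 X t K J = (\<Sum>a\<le>J. h a)"
            by (simp only: rec h_def R_def[symmetric] IH)
          also have "\<dots> = (\<Sum>a\<le>Suc n. h a)" using n by simp
          also have "\<dots> = (\<Sum>i\<le>n. h (n - i))"
            by (rule sum_drop_last) (use R1 in \<open>simp add: h_def C1_def n\<close>)
          also have "\<dots> = (\<Sum>i\<le>n. gbinom (X + int R + 2 + t) (Suc i) * int ((R - 1) choose i)
                 * gbinom ((X + int R + 2 + t) + int (R - 1) + int n - int i) (n - i))"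
          proof (rule sum.cong[OF refl])
            fix i assume "i \<in> {..n}"
            then have i: "i \<le> n" by simp
            have e1: "J - (n - i) = Suc i" using i n by simp
            have e2: "X + 2 * int R + int (n - i) + 1 + t = (X + int R + 2 + t) + int (R - 1) + int n - int i"
              using i R1 by (simp add: of_nat_diff)
            have e3: "X + int R + 1 + (t + 1) = X + int R + 2 + t" by simp
            show "h (n - i) = gbinom (X + int R + 2 + t) (Suc i) * int ((R - 1) choose i)
                 * gbinom ((X + int R + 2 + t) + int (R - 1) + int n - int i) (n - i)"
              unfolding h_def e1 e2 using R1 by (simp add: C1_def e3)
          qed
          also have "\<dots> = int (R - 1 + n + 1 choose n) * gbinom (X + int R + 2 + t + int n) (Suc n)"
            by (rule I1i)
          also have "\<dots> = C1 X t K J"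
          proof -
            have e1: "R - 1 + n + 1 = K - 1" using R1 n R_def JK by auto
            have e2: "X + int R + 2 + t + int n = X + int K + 1 + t" using R_def n JK by simp
            have c: "C1 X t K J = int (K - 1 choose n) * gbinom (X + int K + 1 + t) (Suc n)"
              using Kpos n by (simp add: C1_def)
            show ?thesis unfolding c by (simp only: e1 e2)
          qed
          finally show ?thesis .
        qed
      qed
    qed
  qed
qed

lemma C0_pascal:
  assumes "K = Suc K1"
  shows "int (K1 choose n) * gbinom (X + int K) (Suc n) - int (K1 choose Suc n) * gbinom (X + int K) n
       = int (K1 choose n) * gbinom (X + int K + 1) (Suc n) - int (K choose Suc n) * gbinom (X + int K) n"
proof -
  have "gbinom (X + int K + 1) (Suc n) = gbinom (X + int K) n + gbinom (X + int K) (Suc n)"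
    by (rule gbinom_pascal)
  moreover have "int (K choose Suc n) = int (K1 choose n) + int (K1 choose Suc n)"
    using assms by simp
  ultimately show ?thesis by (simp add: algebra_simps)
qed

lemma T0_closed: "T 0 X 0 K J = C0 X K J"
proof (induction K arbitrary: J rule: less_induct)
  case (less K)
  show ?case
  proof (cases "K = 0")
    case True then show ?thesis by (simp add: T_K0 C0_def)
  next
    case Kpos: False
    show ?thesis
    proof (cases "J = 0")
      case True then show ?thesis using Kpos by (simp add: T_J0 C0_def)
    next
      case Jpos: False
      show ?thesis
      proof (cases "K < J")
        case True
        then have "K - 1 < J - 1" using Kpos by linarith
        then have b1: "(K - 1 choose (J - 1)) = 0" and b2: "(K choose J) = 0" using True by (simp_all add: binomial_eq_0)
        have "C0 X K J = int (K - 1 choose (J - 1)) * gbinom (X + int K + 1) J - int (K choose J) * gbinom (X + int K) (J - 1)"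
          using Kpos Jpos by (simp add: C0_def)
        also have "\<dots> = 0" by (simp only: b1 b2 of_nat_0 mult_zero_left diff_self)
        finally show ?thesis using True by (simp add: T_empty_big)
      next
        case False
        then have J1: "1 \<le> J" and JK: "J \<le> K" using Jpos by auto
        obtain n where n: "J = Suc n" using Jpos by (cases J) auto
        have rec: "T 0 X 0 K J = (\<Sum>a\<le>J. gbinom (X + 2 * int (K - J) + int a) a * T 0 X 0 (K - J) (J - a))"
          using T_rec[OF J1 JK, of 0 X 0] by simp
        show ?thesis
        proof (cases "K = J")
          case True
          have "T 0 X 0 K J = (\<Sum>a\<le>J. gbinom (X + 2 * int (K - J) + int a) a * (if J - a = 0 then 1 else 0))"
            unfolding rec using True by (simp add: T_K0)
          also have "\<dots> = gbinom (X + int J) J" using True by (subst sum_delta_last) simp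
          also have "\<dots> = gbinom (X + int J + 1) J - gbinom (X + int J) (J - 1)"
            using gbinom_pascal[of "X + int J" n] n by simp
          finally show ?thesis using True Jpos by (simp add: C0_def)
        next
          case False
          define R where "R = K - J"
          have R1: "1 \<le> R" using False JK by (simp add: R_def)
          have IH: "T 0 X 0 R (J - a) = C0 X R (J - a)" for a
            using less.IH[of R] R_def J1 JK by simp
          define h where "h a = gbinom (X + 2 * int R + int a) a * C0 X R (J - a)" for a
          define P1 where "P1 i = gbinom (X + int R + 1) (Suc i) * int ((R - 1) choose i)
                 * gbinom ((X + int R + 1) + int (R - 1) + int n - int i) (n - i)" for i
          define P2 where "P2 i = gbinom (X + int R) i * int (R choose Suc i)
                 * gbinom ((X + int R) + int R + int n - int i) (n - i)" for i
          have "T 0 X 0 K J = (\<Sum>a\<le>J. h a)"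
            by (simp only: rec h_def R_def[symmetric] IH)
          also have "\<dots> = (\<Sum>a\<le>Suc n. h a)" using n by simp
          also have "\<dots> = (\<Sum>i\<le>n. h (n - i))"
            by (rule sum_drop_last) (use R1 in \<open>simp add: h_def C0_def n\<close>)
          also have "\<dots> = (\<Sum>i\<le>n. P1 i - P2 i)"
          proof (rule sum.cong[OF refl])
            fix i assume "i \<in> {..n}"
            then have i: "i \<le> n" by simp
            have e1: "J - (n - i) = Suc i" using i n by simp
            have e2: "X + 2 * int R + int (n - i) = (X + int R + 1) + int (R - 1) + int n - int i"
              using i R1 by (simp add: of_nat_diff)
            have e3: "X + 2 * int R + int (n - i) = (X + int R) + int R + int n - int i"
              using i R1 by (simp add: of_nat_diff)
            have c: "C0 X R (Suc i) = int ((R - 1) choose i) * gbinom (X + int R + 1) (Suc i)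
                 - int (R choose Suc i) * gbinom (X + int R) i"
              using R1 by (simp add: C0_def)
            have "h (n - i) = gbinom (X + 2 * int R + int (n - i)) (n - i) * C0 X R (Suc i)"
              unfolding h_def e1 ..
            also have "\<dots> = P1 i - P2 i"
              unfolding c P1_def P2_def e2[symmetric] e3[symmetric] by (simp add: algebra_simps)
            finally show "h (n - i) = P1 i - P2 i" .
          qed
          also have "\<dots> = (\<Sum>i\<le>n. P1 i) - (\<Sum>i\<le>n. P2 i)" by (rule sum_subtractf)
          also have "(\<Sum>i\<le>n. P1 i) = int (R - 1 + n + 1 choose n) * gbinom (X + int R + 1 + int n) (Suc n)"
            unfolding P1_def by (rule I1i)
          also have "(\<Sum>i\<le>n. P2 i) = int (R + n choose Suc n) * gbinom (X + int R + int n + 1) n"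
            unfolding P2_def by (rule S2i)
          also have "int (R - 1 + n + 1 choose n) * gbinom (X + int R + 1 + int n) (Suc n)
                - int (R + n choose Suc n) * gbinom (X + int R + int n + 1) n = C0 X K J"
          proof -
            have K1: "K = Suc (R + n)" using R_def n JK by simp
            have e1: "R - 1 + n + 1 = R + n" using R1 by simp
            have e2: "X + int R + 1 + int n = X + int K" "X + int R + int n + 1 = X + int K" using K1 by simp_all
            have c: "C0 X K J = int (R + n choose n) * gbinom (X + int K + 1) (Suc n) - int (K choose Suc n) * gbinom (X + int K) n"
              using Kpos n K1 by (simp add: C0_def)
            show ?thesis unfolding c e1 e2 by (rule C0_pascal[OF K1])
          qed
          finally show ?thesis .
        qed
      qed
    qed
  qed
qed

lemma vsum1: "(\<Sum>j\<le>K1. int (K1 choose j) * gbinom (X + int K1 + 2) (Suc j)) = gbinom (X + 2 * int K1 + 2) (Suc K1)"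
proof -
  have "gbinom (X + 2 * int K1 + 2) (Suc K1) = (\<Sum>k\<le>Suc K1. gbinom (X + int K1 + 2) k * gbinom (int K1) (Suc K1 - k))"
    using gbinom_vander[where n="Suc K1" and a="X + int K1 + 2" and b="int K1"] by (simp add: algebra_simps)
  also have "\<dots> = gbinom (X + int K1 + 2) 0 * gbinom (int K1) (Suc K1) + (\<Sum>j\<le>K1. gbinom (X + int K1 + 2) (Suc j) * gbinom (int K1) (K1 - j))"
    by (subst sum.atMost_Suc_shift) simp
  also have "\<dots> = (\<Sum>j\<le>K1. int (K1 choose j) * gbinom (X + int K1 + 2) (Suc j))"
  proof -
    have "gbinom (int K1) (Suc K1) = 0" by (simp add: gbinom_nat)
    moreover have "gbinom (int K1) (K1 - j) = int (K1 choose j)" if "j \<le> K1" for j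
      using that by (simp add: gbinom_nat binomial_symmetric[symmetric])
    ultimately show ?thesis by (simp add: mult.commute)
  qed
  finally show ?thesis ..
qed

lemma vsum2: "(\<Sum>j\<le>K1. int (Suc K1 choose Suc j) * gbinom (X + int K1 + 1) j) = gbinom (X + 2 * int K1 + 2) K1"
proof -
  have "gbinom (X + 2 * int K1 + 2) K1 = (\<Sum>j\<le>K1. gbinom (X + int K1 + 1) j * gbinom (int (Suc K1)) (K1 - j))"
    using gbinom_vander[where n=K1 and a="X + int K1 + 1" and b="int (Suc K1)"] by (simp add: algebra_simps)
  also have "\<dots> = (\<Sum>j\<le>K1. int (Suc K1 choose Suc j) * gbinom (X + int K1 + 1) j)"
  proof (rule sum.cong[OF refl])
    fix j assume "j \<in> {..K1}"
    then have "Suc K1 choose (K1 - j) = Suc K1 choose Suc j"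
      using binomial_symmetric[of "Suc j" "Suc K1"] by simp
    then show "gbinom (X + int K1 + 1) j * gbinom (int (Suc K1)) (K1 - j) = int (Suc K1 choose Suc j) * gbinom (X + int K1 + 1) j"
      by (simp only: gbinom_nat mult.commute)
  qed
  finally show ?thesis ..
qed

lemma S1sum: "(\<Sum>J\<le>K. T 1 X 0 K J) = gbinom (X + 2 * int K) K"
proof (cases K)
  case 0 then show ?thesis by (simp add: T_K0)
next
  case (Suc K1)
  have "(\<Sum>J\<le>K. T 1 X 0 K J) = (\<Sum>J\<le>Suc K1. C1 X 0 (Suc K1) J)" using Suc by (simp add: T1_closed)
  also have "\<dots> = (\<Sum>j\<le>K1. int (K1 choose j) * gbinom (X + int K1 + 2) (Suc j))"
    by (subst sum.atMost_Suc_shift) (simp add: C1_def algebra_simps)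
  also have "\<dots> = gbinom (X + 2 * int K1 + 2) (Suc K1)" by (rule vsum1)
  also have "\<dots> = gbinom (X + 2 * int K) K" using Suc by (simp add: algebra_simps)
  finally show ?thesis .
qed

lemma S0sum: "(\<Sum>J\<le>K. T 0 X 0 K J) = gbinom (X + 2 * int K) K - (if K = 0 then 0 else gbinom (X + 2 * int K) (K - 1))"
proof (cases K)
  case 0 then show ?thesis by (simp add: T_K0)
next
  case (Suc K1)
  have "(\<Sum>J\<le>K. T 0 X 0 K J) = (\<Sum>J\<le>Suc K1. C0 X (Suc K1) J)" using Suc by (simp add: T0_closed)
  also have "\<dots> = (\<Sum>j\<le>K1. int (K1 choose j) * gbinom (X + int K1 + 2) (Suc j) - int (Suc K1 choose Suc j) * gbinom (X + int K1 + 1) j)"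
    by (subst sum.atMost_Suc_shift) (simp add: C0_def algebra_simps)
  also have "\<dots> = (\<Sum>j\<le>K1. int (K1 choose j) * gbinom (X + int K1 + 2) (Suc j)) - (\<Sum>j\<le>K1. int (Suc K1 choose Suc j) * gbinom (X + int K1 + 1) j)"
    by (rule sum_subtractf)
  also have "\<dots> = gbinom (X + 2 * int K) K - gbinom (X + 2 * int K) (K - 1)"
    unfolding vsum1 vsum2 using Suc by (simp add: algebra_simps)
  finally show ?thesis using Suc by simp
qed



definition GK :: "nat \<Rightarrow> (nat \<Rightarrow> nat) set" where
  "GK K = {m. m 0 = 0 \<and> (\<forall>n>K. m n = 0) \<and> (\<Sum>n\<le>K. n * m n) = K}"

lemma GK_union: "GK K = (\<Union>J\<in>{..K}. FJ K J)"
proof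
  show "GK K \<subseteq> (\<Union>J\<in>{..K}. FJ K J)"
  proof
    fix m assume m: "m \<in> GK K"
    have "(\<Sum>n\<le>K. m n) \<le> K" using FJ_sum_le[of m K] m unfolding GK_def by auto
    moreover have "m \<in> FJ K (\<Sum>n\<le>K. m n)" using m unfolding GK_def FJ_def by blast
    ultimately show "m \<in> (\<Union>J\<in>{..K}. FJ K J)" by blast
  qed
  show "(\<Union>J\<in>{..K}. FJ K J) \<subseteq> GK K" unfolding GK_def FJ_def by blast
qed

lemma GK_finite: "finite (GK K)"
  unfolding GK_union by (intro finite_UN_I finite_atMost FJ_finite)

lemma sum_GK: "(\<Sum>m\<in>GK K. wt c X t m) = (\<Sum>J\<le>K. T c X t K J)"
  unfolding GK_union T_def
proof (rule sum.UNION_disjoint)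
  show "finite {..K}" by simp
  show "\<forall>J\<in>{..K}. finite (FJ K J)" by (simp add: FJ_finite)
  show "\<forall>i\<in>{..K}. \<forall>j\<in>{..K}. i \<noteq> j \<longrightarrow> FJ K i \<inter> FJ K j = {}"
    unfolding FJ_def by blast
qed

lemma fsum_superset:
  assumes "finite S" "{n. f n \<noteq> 0} \<subseteq> S"
  shows "fsum f = sum f S"
  unfolding fsum_def using assms by (intro sum.mono_neutral_left) auto

lemma fsum_add:
  assumes "finite {n. f n \<noteq> 0}" "finite {n. g n \<noteq> 0}"
  shows "fsum (\<lambda>n. f n + g n) = fsum f + fsum g"
proof -
  let ?S = "{n. f n \<noteq> 0} \<union> {n. g n \<noteq> 0}"
  have "fsum (\<lambda>n. f n + g n) = (\<Sum>n\<in>?S. f n + g n)"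
    by (rule fsum_superset) (use assms in auto)
  also have "\<dots> = (\<Sum>n\<in>?S. f n) + (\<Sum>n\<in>?S. g n)" by (rule sum.distrib)
  also have "(\<Sum>n\<in>?S. f n) = fsum f" by (rule fsum_superset[symmetric]) (use assms in auto)
  also have "(\<Sum>n\<in>?S. g n) = fsum g" by (rule fsum_superset[symmetric]) (use assms in auto)
  finally show ?thesis .
qed

lemma GK_fsum:
  assumes "m \<in> GK K"
  shows "fsum (\<lambda>n. int n * int (m n)) = int K"
proof -
  have b: "\<And>n. n > K \<Longrightarrow> m n = 0" using assms by (simp add: GK_def)
  have "fsum (\<lambda>n. int n * int (m n)) = (\<Sum>n\<le>K. int n * int (m n))"
    by (rule fsum_bound) (simp add: b)
  also have "\<dots> = int (\<Sum>n\<le>K. n * m n)" by simp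
  also have "(\<Sum>n\<le>K. n * m n) = K" using assms by (simp add: GK_def)
  finally show ?thesis .
qed

lemma GK_supp:
  assumes "m \<in> GK K" shows "finite {n. m n \<noteq> 0}"
proof (rule finite_subset[of _ "{..K}"])
  show "{n. m n \<noteq> 0} \<subseteq> {..K}"
  proof
    fix n assume "n \<in> {n. m n \<noteq> 0}"
    then have "m n \<noteq> 0" by simp
    moreover have "\<forall>n>K. m n = 0" using assms by (simp add: GK_def)
    ultimately have "\<not> n > K" by auto
    then show "n \<in> {..K}" by simp
  qed
qed simp

lemma fam_GK:
  assumes m0: "m 0 = 0" and fin: "finite {n. m n \<noteq> 0}"
    and e: "fsum (\<lambda>n. int n * int (m n)) = int K"
  shows "m \<in> GK K"
proof -
  define f where "f n = int n * int (m n)" for n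
  have S: "fsum f = sum f {n. m n \<noteq> 0}"
    by (rule fsum_superset) (use fin in \<open>auto simp: f_def\<close>)
  have b: "m n = 0" if "n > K" for n
  proof (rule ccontr)
    assume nz: "m n \<noteq> 0"
    have "f n \<le> sum f {n. m n \<noteq> 0}"
      by (rule member_le_sum) (use nz fin in \<open>auto simp: f_def\<close>)
    moreover have "int n \<le> f n"
    proof -
      have "int n * 1 \<le> int n * int (m n)" using nz by (intro mult_left_mono) simp_all
      then show ?thesis by (simp add: f_def)
    qed
    moreover have "fsum f = int K" unfolding f_def by (rule e)
    moreover have "int K < int n" using that by simp
    ultimately show False using S by linarith
  qed
  have "fsum f = (\<Sum>n\<le>K. f n)" by (rule fsum_bound) (use b in \<open>auto simp: f_def\<close>)
  moreover have eK: "fsum f = int K" unfolding f_def by (rule e)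
  ultimately have "(\<Sum>n\<le>K. f n) = int K" by simp
  then have "int (\<Sum>n\<le>K. n * m n) = int K" by (simp add: f_def)
  then have "(\<Sum>n\<le>K. n * m n) = K" by (simp only: of_nat_eq_iff)
  then show ?thesis using m0 b unfolding GK_def by blast
qed

lemma GK_unique:
  assumes "m \<in> GK k1" "m \<in> GK k2" shows "k1 = k2"
proof -
  have "int k1 = int k2" using GK_fsum[OF assms(1)] GK_fsum[OF assms(2)] by simp
  then show ?thesis by simp
qed

lemma Zconf_decomp:
  "Zconf N M = (\<lambda>(k, m', m). (N - 2 * k, m, m')) ` (SIGMA k:{k. k \<le> M \<and> 2 * k \<le> N}. GK k \<times> GK (M - k))"
  (is "_ = ?f ` ?S")
proof
  show "Zconf N M \<subseteq> ?f ` ?S"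
  proof
    fix x assume x: "x \<in> Zconf N M"
    obtain Nr m m' where xe: "x = (Nr, m, m')" by (cases x) auto
    have "(Nr, m, m') \<in> Zconf N M" using x xe by simp
    then have "m 0 = 0 \<and> m' 0 = 0 \<and> finite {n. m n \<noteq> 0} \<and> finite {n. m' n \<noteq> 0} \<and>
      int N = int Nr + 2 * fsum (\<lambda>n. int n * int (m' n)) \<and>
      int M = fsum (\<lambda>n. int n * (int (m n) + int (m' n)))" unfolding Zconf_def by simp
    then have m0: "m 0 = 0" and m'0: "m' 0 = 0" and fm: "finite {n. m n \<noteq> 0}" and fm': "finite {n. m' n \<noteq> 0}"
      and eN: "int N = int Nr + 2 * fsum (\<lambda>n. int n * int (m' n))"
      and eM: "int M = fsum (\<lambda>n. int n * (int (m n) + int (m' n)))" by blast+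
    have f1: "finite {n. int n * int (m n) \<noteq> 0}" by (rule finite_subset[OF _ fm]) auto
    have f2: "finite {n. int n * int (m' n) \<noteq> 0}" by (rule finite_subset[OF _ fm']) auto
    have eM2: "int M = fsum (\<lambda>n. int n * int (m n)) + fsum (\<lambda>n. int n * int (m' n))"
      unfolding eM using fsum_add[OF f1 f2] by (simp add: algebra_simps)
    have nn: "0 \<le> fsum (\<lambda>n. int n * int (m n))" "0 \<le> fsum (\<lambda>n. int n * int (m' n))"
      unfolding fsum_def by (auto intro: sum_nonneg)
    define k where "k = nat (fsum (\<lambda>n. int n * int (m' n)))"
    have ek: "fsum (\<lambda>n. int n * int (m' n)) = int k" using nn by (simp add: k_def)
    have kM: "k \<le> M" using eM2 ek nn by simp
    have ek2: "fsum (\<lambda>n. int n * int (m n)) = int (M - k)" using eM2 ek kM by simp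
    have kN: "2 * k \<le> N" and Nr: "Nr = N - 2 * k" using eN ek by simp_all
    have "m' \<in> GK k" by (rule fam_GK[OF m'0 fm' ek])
    moreover have "m \<in> GK (M - k)" by (rule fam_GK[OF m0 fm ek2])
    ultimately have "(k, m', m) \<in> ?S" using kM kN by auto
    moreover have "x = ?f (k, m', m)" using xe Nr by simp
    ultimately show "x \<in> ?f ` ?S" by blast
  qed
  show "?f ` ?S \<subseteq> Zconf N M"
  proof
    fix x assume "x \<in> ?f ` ?S"
    then obtain k m' m where k: "k \<le> M" "2 * k \<le> N" and m': "m' \<in> GK k" and m: "m \<in> GK (M - k)"
      and xe: "x = (N - 2 * k, m, m')" by auto
    have f1: "finite {n. int n * int (m n) \<noteq> 0}" by (rule finite_subset[OF _ GK_supp[OF m]]) auto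
    have f2: "finite {n. int n * int (m' n) \<noteq> 0}" by (rule finite_subset[OF _ GK_supp[OF m']]) auto
    have "fsum (\<lambda>n. int n * (int (m n) + int (m' n))) = fsum (\<lambda>n. int n * int (m n)) + fsum (\<lambda>n. int n * int (m' n))"
      using fsum_add[OF f1 f2] by (simp add: algebra_simps)
    also have "\<dots> = int M" using GK_fsum[OF m] GK_fsum[OF m'] k by simp
    finally have eM: "int M = fsum (\<lambda>n. int n * (int (m n) + int (m' n)))" ..
    have eN: "int N = int (N - 2 * k) + 2 * fsum (\<lambda>n. int n * int (m' n))"
      using GK_fsum[OF m'] k by simp
    have m0: "m 0 = 0" using m by (simp add: GK_def)
    have m'0: "m' 0 = 0" using m' by (simp add: GK_def)
    show "x \<in> Zconf N M" unfolding xe Zconf_def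
      using m0 m'0 eM eN GK_supp[OF m] GK_supp[OF m'] by simp
  qed
qed

lemma Zconf_inj: "inj_on (\<lambda>(k, m', m). (N - 2 * k, m, m')) (SIGMA k:{k. k \<le> M \<and> 2 * k \<le> N}. GK k \<times> GK (M - k))"
proof (rule inj_onI)
  fix x y assume x: "x \<in> (SIGMA k:{k. k \<le> M \<and> 2 * k \<le> N}. GK k \<times> GK (M - k))"
    and y: "y \<in> (SIGMA k:{k. k \<le> M \<and> 2 * k \<le> N}. GK k \<times> GK (M - k))"
    and e: "(\<lambda>(k, m', m). (N - 2 * k, m, m')) x = (\<lambda>(k, m', m). (N - 2 * k, m, m')) y"
  obtain k1 a1 b1 where xe: "x = (k1, a1, b1)" by (cases x) auto
  obtain k2 a2 b2 where ye: "y = (k2, a2, b2)" by (cases y) auto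
  have "a1 = a2" "b1 = b2" using e xe ye by auto
  moreover have "k1 = k2" using x y xe ye \<open>a1 = a2\<close> GK_unique by auto
  ultimately show "x = y" using xe ye by simp
qed



definition Zc :: "int \<Rightarrow> nat \<Rightarrow> nat \<Rightarrow> nat \<Rightarrow> int" where
  "Zc c L N M = (\<Sum>(Nr, m, m') \<in> Zconf N M.
     gbinom (int L) Nr *
     fprod_pos (\<lambda>n. gbinom (Pp L N m' n + int (m' n) + c * int n) (m' n) *
                    gbinom (P N M m n + int (m n)) (m n)))"

lemma Z_Zc: "Z L N M = Zc 0 L N M"
  unfolding Z_def Zc_def by simp

lemma Ztilde_Zc: "Ztilde L N M = Zc 1 L N M"
  unfolding Ztilde_def Zc_def by simp

lemma Pp_V: "Pp L N m' n = V (int L - int N) m' n"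
  unfolding Pp_def V_def ..

lemma P_V: "P N M m n = V (int N - 2 * int M) m n"
  unfolding P_def V_def ..

lemma fprod_mult:
  assumes "\<And>n. n > B \<Longrightarrow> g n = 1" "\<And>n. n > B \<Longrightarrow> h n = 1"
  shows "fprod_pos (\<lambda>n. g n * h n) = fprod_pos g * fprod_pos h"
proof -
  have "fprod_pos (\<lambda>n. g n * h n) = (\<Prod>n\<in>{1..B}. g n * h n)"
    by (rule fprod_bound) (simp add: assms)
  also have "\<dots> = (\<Prod>n\<in>{1..B}. g n) * (\<Prod>n\<in>{1..B}. h n)" by (rule prod.distrib)
  also have "(\<Prod>n\<in>{1..B}. g n) = fprod_pos g" by (rule fprod_bound[symmetric]) (simp add: assms)
  also have "(\<Prod>n\<in>{1..B}. h n) = fprod_pos h" by (rule fprod_bound[symmetric]) (simp add: assms)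
  finally show ?thesis .
qed

lemma GK_bound: "m \<in> GK K \<Longrightarrow> K \<le> B \<Longrightarrow> n > B \<Longrightarrow> m n = 0"
  by (simp add: GK_def)

lemma summand_split:
  assumes m': "m' \<in> GK k" and m: "m \<in> GK (M - k)" and kM: "k \<le> M"
  shows "fprod_pos (\<lambda>n. gbinom (Pp L N m' n + int (m' n) + c * int n) (m' n) * gbinom (P N M m n + int (m n)) (m n))
     = wt c (int L - int N) 0 m' * wt 0 (int N - 2 * int M) 0 m"
proof -
  have "fprod_pos (\<lambda>n. gbinom (Pp L N m' n + int (m' n) + c * int n) (m' n) * gbinom (P N M m n + int (m n)) (m n))
     = fprod_pos (\<lambda>n. gbinom (Pp L N m' n + int (m' n) + c * int n) (m' n)) * fprod_pos (\<lambda>n. gbinom (P N M m n + int (m n)) (m n))"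
  proof (rule fprod_mult[of M])
    fix n assume "n > M"
    then show "gbinom (Pp L N m' n + int (m' n) + c * int n) (m' n) = 1"
      using GK_bound[OF m' kM] by simp
    show "gbinom (P N M m n + int (m n)) (m n) = 1"
      using GK_bound[OF m _ \<open>n > M\<close>] by simp
  qed
  also have "fprod_pos (\<lambda>n. gbinom (Pp L N m' n + int (m' n) + c * int n) (m' n)) = wt c (int L - int N) 0 m'"
    unfolding wt_def Pp_V by simp
  also have "fprod_pos (\<lambda>n. gbinom (P N M m n + int (m n)) (m n)) = wt 0 (int N - 2 * int M) 0 m"
    unfolding wt_def P_V by simp
  finally show ?thesis .
qed

lemma Zc_formula:
  "Zc c L N M = (\<Sum>k\<in>{k. k \<le> M \<and> 2 * k \<le> N}. gbinom (int L) (N - 2 * k) *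
      (\<Sum>J\<le>k. T c (int L - int N) 0 k J) * (\<Sum>J\<le>M - k. T 0 (int N - 2 * int M) 0 (M - k) J))"
proof -
  define f where "f = (\<lambda>(Nr, m, m'). gbinom (int L) Nr *
     fprod_pos (\<lambda>n. gbinom (Pp L N m' n + int (m' n) + c * int n) (m' n) *
                    gbinom (P N M m n + int (m n)) (m n)))"
  define S where "S = (SIGMA k:{k. k \<le> M \<and> 2 * k \<le> N}. GK k \<times> GK (M - k))"
  define \<phi> where "\<phi> = (\<lambda>(k::nat, m'::nat\<Rightarrow>nat, m::nat\<Rightarrow>nat). (N - 2 * k, m, m'))"
  have "Zc c L N M = sum f (Zconf N M)" unfolding Zc_def f_def ..
  also have "\<dots> = sum f (\<phi> ` S)" unfolding \<phi>_def S_def Zconf_decomp ..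
  also have "\<dots> = sum (f \<circ> \<phi>) S" unfolding \<phi>_def S_def by (rule sum.reindex[OF Zconf_inj])
  also have "\<dots> = (\<Sum>k\<in>{k. k \<le> M \<and> 2 * k \<le> N}. \<Sum>p\<in>GK k \<times> GK (M - k). f (\<phi> (k, p)))"
    unfolding S_def by (subst sum.Sigma) (auto simp: GK_finite)
  also have "\<dots> = (\<Sum>k\<in>{k. k \<le> M \<and> 2 * k \<le> N}. gbinom (int L) (N - 2 * k) *
      (\<Sum>m'\<in>GK k. wt c (int L - int N) 0 m') * (\<Sum>m\<in>GK (M - k). wt 0 (int N - 2 * int M) 0 m))"
  proof (rule sum.cong[OF refl])
    fix k assume k: "k \<in> {k. k \<le> M \<and> 2 * k \<le> N}"
    have "(\<Sum>p\<in>GK k \<times> GK (M - k). f (\<phi> (k, p))) = (\<Sum>m'\<in>GK k. \<Sum>m\<in>GK (M - k). f (\<phi> (k, m', m)))"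
      by (simp add: sum.cartesian_product case_prod_unfold)
    also have "\<dots> = (\<Sum>m'\<in>GK k. \<Sum>m\<in>GK (M - k). gbinom (int L) (N - 2 * k) * (wt c (int L - int N) 0 m' * wt 0 (int N - 2 * int M) 0 m))"
    proof (intro sum.cong refl)
      fix m' m assume "m' \<in> GK k" "m \<in> GK (M - k)"
      then show "f (\<phi> (k, m', m)) = gbinom (int L) (N - 2 * k) * (wt c (int L - int N) 0 m' * wt 0 (int N - 2 * int M) 0 m)"
        unfolding f_def \<phi>_def using summand_split k by simp
    qed
    also have "\<dots> = gbinom (int L) (N - 2 * k) * (\<Sum>m'\<in>GK k. wt c (int L - int N) 0 m') * (\<Sum>m\<in>GK (M - k). wt 0 (int N - 2 * int M) 0 m)"
      by (simp only: mult.assoc sum_product) (simp only: sum_distrib_left)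
    finally show "(\<Sum>p\<in>GK k \<times> GK (M - k). f (\<phi> (k, p))) = gbinom (int L) (N - 2 * k) * (\<Sum>m'\<in>GK k. wt c (int L - int N) 0 m') * (\<Sum>m\<in>GK (M - k). wt 0 (int N - 2 * int M) 0 m)" .
  qed
  also have "\<dots> = (\<Sum>k\<in>{k. k \<le> M \<and> 2 * k \<le> N}. gbinom (int L) (N - 2 * k) *
      (\<Sum>J\<le>k. T c (int L - int N) 0 k J) * (\<Sum>J\<le>M - k. T 0 (int N - 2 * int M) 0 (M - k) J))"
    by (simp only: sum_GK)
  finally show ?thesis .
qed



definition gn :: "nat \<Rightarrow> nat \<Rightarrow> int" where
  "gn n k = int (n choose k) - (if k = 0 then 0 else int (n choose (k - 1)))"

lemma gn_zero: "Suc n < k \<Longrightarrow> gn n k = 0"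
  by (simp add: gn_def binomial_eq_0)

lemma polyQ:
  fixes x :: "'a::comm_ring_1"
  shows "(1 + x) ^ n * (1 - x) = (\<Sum>k\<le>Suc n. of_int (gn n k) * x ^ k)"
proof -
  have b: "(1 + x) ^ n = (\<Sum>k\<le>n. of_nat (n choose k) * x ^ k)"
    using binomial_ring[of x 1 n] by (simp add: add.commute)
  have "(1 + x) ^ n * (1 - x) = (\<Sum>k\<le>n. of_nat (n choose k) * x ^ k) - (\<Sum>k\<le>n. of_nat (n choose k) * x ^ Suc k)"
  proof -
    have "(\<Sum>k\<le>n. of_nat (n choose k) * x ^ k) * (1 - x) = (\<Sum>k\<le>n. of_nat (n choose k) * x ^ k) - (\<Sum>k\<le>n. of_nat (n choose k) * x ^ k) * x"
      by (simp add: right_diff_distrib)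
    also have "(\<Sum>k\<le>n. of_nat (n choose k) * x ^ k) * x = (\<Sum>k\<le>n. of_nat (n choose k) * x ^ Suc k)"
      unfolding sum_distrib_right by (rule sum.cong) (simp_all add: power_Suc2 mult.assoc)
    finally show ?thesis unfolding b .
  qed
  also have "(\<Sum>k\<le>n. of_nat (n choose k) * x ^ k) = (\<Sum>k\<le>Suc n. of_nat (n choose k) * x ^ k)"
    by (simp add: binomial_eq_0)
  also have "(\<Sum>k\<le>n. of_nat (n choose k) * x ^ Suc k) = (\<Sum>k\<le>Suc n. (if k = 0 then 0 else of_nat (n choose (k - 1))) * x ^ k)"
    by (subst sum.atMost_Suc_shift) simp
  also have "(\<Sum>k\<le>Suc n. of_nat (n choose k) * x ^ k) - (\<Sum>k\<le>Suc n. (if k = 0 then 0 else of_nat (n choose (k - 1))) * x ^ k)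
      = (\<Sum>k\<le>Suc n. of_int (gn n k) * x ^ k)"
    unfolding sum_subtractf[symmetric] by (rule sum.cong) (auto simp: gn_def algebra_simps)
  finally show ?thesis .
qed

lemma polyQ_ext:
  fixes x :: "'a::comm_ring_1"
  assumes "Suc n \<le> D"
  shows "(1 + x) ^ n * (1 - x) = (\<Sum>k\<le>D. of_int (gn n k) * x ^ k)"
proof -
  have "(\<Sum>k\<le>D. of_int (gn n k) * x ^ k) = (\<Sum>k\<le>Suc n. of_int (gn n k) * x ^ k)"
    by (rule sum_ext_bound) (use assms in \<open>auto simp: gn_zero\<close>)
  then show ?thesis using polyQ by simp
qed

lemma mono_eq: "(of_int c :: int poly poly) * var_u ^ a * var_v ^ b = monom (monom c b) a"
proof -
  have u: "var_u ^ a = monom 1 a" by (simp add: var_u_def monom_altdef)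
  have v: "var_v ^ b = monom (monom 1 b) 0" by (simp add: var_v_def poly_const_pow monom_altdef monom_0)
  have c: "(of_int c :: int poly poly) = monom (monom c 0) 0" by (simp add: of_int_poly monom_0)
  show ?thesis unfolding u v c mult_monom by (simp add: mult_monom)
qed

lemma coeff_mono: "coeff (coeff ((of_int c :: int poly poly) * var_u ^ a * var_v ^ b) N) M = (if a = N \<and> b = M then c else 0)"
  unfolding mono_eq by simp



lemma base_binom:
  "(1 + var_u) ^ L * (1 + var_u * var_v) ^ L = (\<Sum>r\<le>L. of_nat (L choose r) * (var_u * (1 + var_v)) ^ r * (1 + var_u ^ 2 * var_v) ^ (L - r))"
proof -
  have "(1 + var_u) ^ L * (1 + var_u * var_v) ^ L = ((1 + var_u) * (1 + var_u * var_v)) ^ L"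
    by (simp add: power_mult_distrib)
  also have "(1 + var_u) * (1 + var_u * var_v) = var_u * (1 + var_v) + (1 + var_u ^ 2 * var_v)"
    by (simp add: algebra_simps power2_eq_square)
  finally show ?thesis by (simp add: binomial_ring)
qed

lemma P_expand1:
  assumes D: "L + 1 \<le> D"
  shows "(1 + var_u) ^ L * (1 + var_u * var_v) ^ L * (1 - var_u ^ 2 * var_v) * (1 - var_v)
     = (\<Sum>r\<le>L. \<Sum>k\<le>D. \<Sum>j\<le>D. of_int (int (L choose r) * gn r k * gn (L - r) j) * var_u ^ (r + 2 * j) * var_v ^ (k + j))"
proof -
  have "(1 + var_u) ^ L * (1 + var_u * var_v) ^ L * (1 - var_u ^ 2 * var_v) * (1 - var_v)
     = (\<Sum>r\<le>L. of_nat (L choose r) * var_u ^ r * ((1 + var_v) ^ r * (1 - var_v)) * ((1 + var_u ^ 2 * var_v) ^ (L - r) * (1 - var_u ^ 2 * var_v)))"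
    unfolding base_binom sum_distrib_right
    by (rule sum.cong) (simp_all only: power_mult_distrib mult_ac)
  also have "\<dots> = (\<Sum>r\<le>L. \<Sum>k\<le>D. \<Sum>j\<le>D. of_int (int (L choose r) * gn r k * gn (L - r) j) * var_u ^ (r + 2 * j) * var_v ^ (k + j))"
  proof (rule sum.cong[OF refl])
    fix r assume r: "r \<in> {..L}"
    have pw: "\<And>j. (var_u ^ 2 * var_v) ^ j = var_u ^ (2 * j) * var_v ^ j" by (simp add: power_mult_distrib power_mult)
    have pw2: "\<And>j. (var_u ^ 2) ^ j = var_u ^ (2 * j)" by (simp add: power_mult)
    have q1: "(1 + var_v) ^ r * (1 - var_v) = (\<Sum>k\<le>D. of_int (gn r k) * var_v ^ k)"
      by (rule polyQ_ext) (use r D in auto)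
    have q2: "(1 + var_u ^ 2 * var_v) ^ (L - r) * (1 - var_u ^ 2 * var_v) = (\<Sum>j\<le>D. of_int (gn (L - r) j) * (var_u ^ 2 * var_v) ^ j)"
      by (rule polyQ_ext) (use r D in auto)
    show "of_nat (L choose r) * var_u ^ r * ((1 + var_v) ^ r * (1 - var_v)) * ((1 + var_u ^ 2 * var_v) ^ (L - r) * (1 - var_u ^ 2 * var_v))
      = (\<Sum>k\<le>D. \<Sum>j\<le>D. of_int (int (L choose r) * gn r k * gn (L - r) j) * var_u ^ (r + 2 * j) * var_v ^ (k + j))"
      unfolding q1 q2
      by (simp only: mult.assoc sum_product) (simp only: sum_distrib_left, intro sum.cong refl, simp add: pw pw2 power_add algebra_simps)
  qed
  finally show ?thesis .
qed

lemma P_expand2: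
  assumes D: "L + 1 \<le> D"
  shows "(1 + var_u) ^ L * (1 + var_u * var_v) ^ L * (1 - var_v)
     = (\<Sum>r\<le>L. \<Sum>k\<le>D. \<Sum>j\<le>D. of_int (int (L choose r) * gn r k * int ((L - r) choose j)) * var_u ^ (r + 2 * j) * var_v ^ (k + j))"
proof -
  have "(1 + var_u) ^ L * (1 + var_u * var_v) ^ L * (1 - var_v)
     = (\<Sum>r\<le>L. of_nat (L choose r) * var_u ^ r * ((1 + var_v) ^ r * (1 - var_v)) * ((1 + var_u ^ 2 * var_v) ^ (L - r)))"
    unfolding base_binom sum_distrib_right
    by (rule sum.cong) (simp_all only: power_mult_distrib mult_ac)
  also have "\<dots> = (\<Sum>r\<le>L. \<Sum>k\<le>D. \<Sum>j\<le>D. of_int (int (L choose r) * gn r k * int ((L - r) choose j)) * var_u ^ (r + 2 * j) * var_v ^ (k + j))"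
  proof (rule sum.cong[OF refl])
    fix r assume r: "r \<in> {..L}"
    have pw: "\<And>j. (var_u ^ 2 * var_v) ^ j = var_u ^ (2 * j) * var_v ^ j" by (simp add: power_mult_distrib power_mult)
    have pw2: "\<And>j. (var_u ^ 2) ^ j = var_u ^ (2 * j)" by (simp add: power_mult)
    have q1: "(1 + var_v) ^ r * (1 - var_v) = (\<Sum>k\<le>D. of_int (gn r k) * var_v ^ k)"
      by (rule polyQ_ext) (use r D in auto)
    have q2: "(1 + var_u ^ 2 * var_v) ^ (L - r) = (\<Sum>j\<le>D. of_nat ((L - r) choose j) * (var_u ^ 2 * var_v) ^ j)"
    proof -
      have "(1 + var_u ^ 2 * var_v) ^ (L - r) = (\<Sum>j\<le>L - r. of_nat ((L - r) choose j) * (var_u ^ 2 * var_v) ^ j)"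
        using binomial_ring[of "var_u ^ 2 * var_v" 1 "L - r"] by (simp add: add.commute)
      also have "\<dots> = (\<Sum>j\<le>D. of_nat ((L - r) choose j) * (var_u ^ 2 * var_v) ^ j)"
        by (rule sum_ext_bound[symmetric]) (use r D in \<open>auto simp: binomial_eq_0\<close>)
      finally show ?thesis .
    qed
    show "of_nat (L choose r) * var_u ^ r * ((1 + var_v) ^ r * (1 - var_v)) * ((1 + var_u ^ 2 * var_v) ^ (L - r))
      = (\<Sum>k\<le>D. \<Sum>j\<le>D. of_int (int (L choose r) * gn r k * int ((L - r) choose j)) * var_u ^ (r + 2 * j) * var_v ^ (k + j))"
      unfolding q1 q2
      by (simp only: mult.assoc sum_product) (simp only: sum_distrib_left, intro sum.cong refl, simp add: pw pw2 power_add algebra_simps)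
  qed
  finally show ?thesis .
qed

lemma coeff_triple:
  "coeff (coeff (\<Sum>r\<le>L. \<Sum>k\<le>D. \<Sum>j\<le>D. of_int (F r k j) * var_u ^ (r + 2 * j) * var_v ^ (k + j)) N) M
   = (\<Sum>r\<le>L. \<Sum>k\<le>D. \<Sum>j\<le>D. if r + 2 * j = N \<and> k + j = M then F r k j else 0)"
  by (simp add: coeff_sum coeff_mono)

lemma tri_delta:
  fixes F :: "nat \<Rightarrow> nat \<Rightarrow> nat \<Rightarrow> int"
  assumes "M \<le> D"
  shows "(\<Sum>r\<le>L. \<Sum>k\<le>D. \<Sum>j\<le>D. if r + 2 * j = N \<and> k + j = M then F r k j else 0)
     = (\<Sum>j\<le>M. if 2 * j \<le> N \<and> N - 2 * j \<le> L then F (N - 2 * j) (M - j) j else 0)"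
proof -
  have "(\<Sum>r\<le>L. \<Sum>k\<le>D. \<Sum>j\<le>D. if r + 2 * j = N \<and> k + j = M then F r k j else 0)
      = (\<Sum>r\<le>L. \<Sum>j\<le>D. \<Sum>k\<le>D. if r + 2 * j = N \<and> k + j = M then F r k j else 0)"
    by (rule sum.cong[OF refl]) (rule sum.swap)
  also have "\<dots> = (\<Sum>j\<le>D. \<Sum>r\<le>L. \<Sum>k\<le>D. if r + 2 * j = N \<and> k + j = M then F r k j else 0)"
    by (rule sum.swap)
  also have "\<dots> = (\<Sum>j\<le>D. if 2 * j \<le> N \<and> N - 2 * j \<le> L \<and> j \<le> M then F (N - 2 * j) (M - j) j else 0)"
  proof (rule sum.cong[OF refl])
    fix j assume "j \<in> {..D}"
    have inner: "(\<Sum>k\<le>D. if r + 2 * j = N \<and> k + j = M then F r k j else 0)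
        = (if r + 2 * j = N \<and> j \<le> M then F r (M - j) j else 0)" for r
    proof -
      have "(\<Sum>k\<le>D. if r + 2 * j = N \<and> k + j = M then F r k j else 0)
          = (\<Sum>k\<le>D. if k = M - j then (if r + 2 * j = N \<and> j \<le> M then F r k j else 0) else 0)"
        by (rule sum.cong[OF refl]) auto
      also have "\<dots> = (if r + 2 * j = N \<and> j \<le> M then F r (M - j) j else 0)"
      proof -
        have "M - j \<le> D" using assms by linarith
        then show ?thesis by (simp add: sum.delta')
      qed
      finally show ?thesis .
    qed
    have "(\<Sum>r\<le>L. \<Sum>k\<le>D. if r + 2 * j = N \<and> k + j = M then F r k j else 0)
        = (\<Sum>r\<le>L. if r = N - 2 * j then (if 2 * j \<le> N \<and> j \<le> M then F r (M - j) j else 0) else 0)"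
      unfolding inner by (rule sum.cong[OF refl]) auto
    also have "\<dots> = (if 2 * j \<le> N \<and> N - 2 * j \<le> L \<and> j \<le> M then F (N - 2 * j) (M - j) j else 0)"
      by (simp add: sum.delta')
    finally show "(\<Sum>r\<le>L. \<Sum>k\<le>D. if r + 2 * j = N \<and> k + j = M then F r k j else 0)
        = (if 2 * j \<le> N \<and> N - 2 * j \<le> L \<and> j \<le> M then F (N - 2 * j) (M - j) j else 0)" .
  qed
  also have "\<dots> = (\<Sum>j\<le>M. if 2 * j \<le> N \<and> N - 2 * j \<le> L \<and> j \<le> M then F (N - 2 * j) (M - j) j else 0)"
    by (rule sum_ext_bound) (use assms in auto)
  also have "\<dots> = (\<Sum>j\<le>M. if 2 * j \<le> N \<and> N - 2 * j \<le> L then F (N - 2 * j) (M - j) j else 0)"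
    by (rule sum.cong[OF refl]) auto
  finally show ?thesis .
qed



definition S0v :: "int \<Rightarrow> nat \<Rightarrow> int" where
  "S0v X K = gbinom (X + 2 * int K) K - (if K = 0 then 0 else gbinom (X + 2 * int K) (K - 1))"

lemma S0v_nat: "X + 2 * int K = int n \<Longrightarrow> S0v X K = gn n K"
  unfolding S0v_def gn_def by (simp add: gbinom_nat)

lemma Z_sum:
  "Z L N M = (\<Sum>k\<le>M. if 2 * k \<le> N then gbinom (int L) (N - 2 * k) * S0v (int L - int N) k * S0v (int N - 2 * int M) (M - k) else 0)"
proof -
  have "Z L N M = (\<Sum>k\<in>{k. k \<le> M \<and> 2 * k \<le> N}. gbinom (int L) (N - 2 * k) * S0v (int L - int N) k * S0v (int N - 2 * int M) (M - k))"
    unfolding Z_Zc Zc_formula S0sum S0v_def ..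
  also have "{k. k \<le> M \<and> 2 * k \<le> N} = {k \<in> {..M}. 2 * k \<le> N}" by auto
  also have "(\<Sum>k\<in>{k \<in> {..M}. 2 * k \<le> N}. gbinom (int L) (N - 2 * k) * S0v (int L - int N) k * S0v (int N - 2 * int M) (M - k))
     = (\<Sum>k\<le>M. if 2 * k \<le> N then gbinom (int L) (N - 2 * k) * S0v (int L - int N) k * S0v (int N - 2 * int M) (M - k) else 0)"
    by (rule sum.inter_filter) simp
  finally show ?thesis .
qed

lemma Ztilde_sum:
  "Ztilde L N M = (\<Sum>k\<le>M. if 2 * k \<le> N then gbinom (int L) (N - 2 * k) * gbinom (int L - int N + 2 * int k) k * S0v (int N - 2 * int M) (M - k) else 0)"
proof -
  have "Ztilde L N M = (\<Sum>k\<in>{k. k \<le> M \<and> 2 * k \<le> N}. gbinom (int L) (N - 2 * k) * gbinom (int L - int N + 2 * int k) k * S0v (int N - 2 * int M) (M - k))"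
    unfolding Ztilde_Zc Zc_formula S0sum S1sum S0v_def ..
  also have "{k. k \<le> M \<and> 2 * k \<le> N} = {k \<in> {..M}. 2 * k \<le> N}" by auto
  also have "(\<Sum>k\<in>{k \<in> {..M}. 2 * k \<le> N}. gbinom (int L) (N - 2 * k) * gbinom (int L - int N + 2 * int k) k * S0v (int N - 2 * int M) (M - k))
     = (\<Sum>k\<le>M. if 2 * k \<le> N then gbinom (int L) (N - 2 * k) * gbinom (int L - int N + 2 * int k) k * S0v (int N - 2 * int M) (M - k) else 0)"
    by (rule sum.inter_filter) simp
  finally show ?thesis .
qed

lemma part1: "coeff (coeff ((1 + var_u) ^ L * (1 + var_u * var_v) ^ L * (1 - var_u ^ 2 * var_v) * (1 - var_v)) N) M = Z L N M"
proof -
  define D where "D = L + 1 + M"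
  have "coeff (coeff ((1 + var_u) ^ L * (1 + var_u * var_v) ^ L * (1 - var_u ^ 2 * var_v) * (1 - var_v)) N) M
     = (\<Sum>j\<le>M. if 2 * j \<le> N \<and> N - 2 * j \<le> L then int (L choose (N - 2 * j)) * gn (N - 2 * j) (M - j) * gn (L - (N - 2 * j)) j else 0)"
  proof -
    have e: "(1 + var_u) ^ L * (1 + var_u * var_v) ^ L * (1 - var_u ^ 2 * var_v) * (1 - var_v) = (\<Sum>r\<le>L. \<Sum>k\<le>D. \<Sum>j\<le>D. of_int (int (L choose r) * gn r k * gn (L - r) j) * var_u ^ (r + 2 * j) * var_v ^ (k + j))"
      by (rule P_expand1) (simp add: D_def)
    have "coeff (coeff ((1 + var_u) ^ L * (1 + var_u * var_v) ^ L * (1 - var_u ^ 2 * var_v) * (1 - var_v)) N) M = (\<Sum>r\<le>L. \<Sum>k\<le>D. \<Sum>j\<le>D. if r + 2 * j = N \<and> k + j = M then int (L choose r) * gn r k * gn (L - r) j else 0)"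
      unfolding e by (rule coeff_triple)
    also have "\<dots> = (\<Sum>j\<le>M. if 2 * j \<le> N \<and> N - 2 * j \<le> L then int (L choose (N - 2 * j)) * gn (N - 2 * j) (M - j) * gn (L - (N - 2 * j)) j else 0)"
      by (rule tri_delta) (simp add: D_def)
    finally show ?thesis .
  qed
  also have "\<dots> = Z L N M"
    unfolding Z_sum
  proof (rule sum.cong[OF refl])
    fix k assume "k \<in> {..M}"
    then have kM: "k \<le> M" by simp
    show "(if 2 * k \<le> N \<and> N - 2 * k \<le> L then int (L choose (N - 2 * k)) * gn (N - 2 * k) (M - k) * gn (L - (N - 2 * k)) k else 0)
       = (if 2 * k \<le> N then gbinom (int L) (N - 2 * k) * S0v (int L - int N) k * S0v (int N - 2 * int M) (M - k) else 0)"
    proof (cases "2 * k \<le> N")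
      case True
      have s2: "S0v (int N - 2 * int M) (M - k) = gn (N - 2 * k) (M - k)"
        by (rule S0v_nat) (use True kM in simp)
      show ?thesis
      proof (cases "N - 2 * k \<le> L")
        case True2: True
        have s1: "S0v (int L - int N) k = gn (L - (N - 2 * k)) k"
          by (rule S0v_nat) (use True True2 in simp)
        show ?thesis using True True2 by (simp add: s1 s2 gbinom_nat)
      next
        case False
        then show ?thesis using True by (simp add: gbinom_nat binomial_eq_0)
      qed
    qed simp
  qed
  finally show ?thesis .
qed

lemma part2: "coeff (coeff ((1 + var_u) ^ L * (1 + var_u * var_v) ^ L * (1 - var_v)) N) M = Ztilde L N M"
proof -
  define D where "D = L + 1 + M"
  have "coeff (coeff ((1 + var_u) ^ L * (1 + var_u * var_v) ^ L * (1 - var_v)) N) M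
     = (\<Sum>j\<le>M. if 2 * j \<le> N \<and> N - 2 * j \<le> L then int (L choose (N - 2 * j)) * gn (N - 2 * j) (M - j) * int ((L - (N - 2 * j)) choose j) else 0)"
  proof -
    have e: "(1 + var_u) ^ L * (1 + var_u * var_v) ^ L * (1 - var_v) = (\<Sum>r\<le>L. \<Sum>k\<le>D. \<Sum>j\<le>D. of_int (int (L choose r) * gn r k * int ((L - r) choose j)) * var_u ^ (r + 2 * j) * var_v ^ (k + j))"
      by (rule P_expand2) (simp add: D_def)
    have "coeff (coeff ((1 + var_u) ^ L * (1 + var_u * var_v) ^ L * (1 - var_v)) N) M = (\<Sum>r\<le>L. \<Sum>k\<le>D. \<Sum>j\<le>D. if r + 2 * j = N \<and> k + j = M then int (L choose r) * gn r k * int ((L - r) choose j) else 0)"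
      unfolding e by (rule coeff_triple)
    also have "\<dots> = (\<Sum>j\<le>M. if 2 * j \<le> N \<and> N - 2 * j \<le> L then int (L choose (N - 2 * j)) * gn (N - 2 * j) (M - j) * int ((L - (N - 2 * j)) choose j) else 0)"
      by (rule tri_delta) (simp add: D_def)
    finally show ?thesis .
  qed
  also have "\<dots> = Ztilde L N M"
    unfolding Ztilde_sum
  proof (rule sum.cong[OF refl])
    fix k assume "k \<in> {..M}"
    then have kM: "k \<le> M" by simp
    show "(if 2 * k \<le> N \<and> N - 2 * k \<le> L then int (L choose (N - 2 * k)) * gn (N - 2 * k) (M - k) * int ((L - (N - 2 * k)) choose k) else 0)
       = (if 2 * k \<le> N then gbinom (int L) (N - 2 * k) * gbinom (int L - int N + 2 * int k) k * S0v (int N - 2 * int M) (M - k) else 0)"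
    proof (cases "2 * k \<le> N")
      case True
      have s2: "S0v (int N - 2 * int M) (M - k) = gn (N - 2 * k) (M - k)"
        by (rule S0v_nat) (use True kM in simp)
      show ?thesis
      proof (cases "N - 2 * k \<le> L")
        case True2: True
        have s1: "int L - int N + 2 * int k = int (L - (N - 2 * k))" using True True2 by simp
        have g: "gbinom (int L - int N + 2 * int k) k = int ((L - (N - 2 * k)) choose k)"
          by (simp only: s1 gbinom_nat)
        show ?thesis using True True2 by (simp only: g s2 gbinom_nat if_True simp_thms) (simp only: mult_ac)
      next
        case False
        then show ?thesis using True by (simp add: gbinom_nat binomial_eq_0)
      qed
    qed simp
  qed
  finally show ?thesis .
qed

theorem proposition3:
  fixes L :: nat
  assumes "L \<ge> 1"
  shows "(\<forall>N M. coeff (coeff ((1 + var_u) ^ L * (1 + var_u * var_v) ^ L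
                  * (1 - var_u ^ 2 * var_v) * (1 - var_v)) N) M = Z L N M)
       \<and> (\<forall>N M. coeff (coeff ((1 + var_u) ^ L * (1 + var_u * var_v) ^ L
                  * (1 - var_v)) N) M = Ztilde L N M)"
  using part1 part2 by blast

end
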